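(* Under the hypotheses of Theorem 1 with $\mathcal{G}$ being $(f+1,f+1)$-robust (synchronous network, DP-MSR with parameter $f$, $f$-total malicious model, $1+\frac{T^2}{2}\le\alpha T\le 2-\frac{T^2}{2}$), the normal agents reach resilient consensus with an exponential convergence rate: letting $V(k)=\max_{i\notin\mathcal{M}}\max\{\hat{x}_i[k],\hat{x}_i[k-1]\}-\min_{i\notin\mathcal{M}}\min\{\hat{x}_i[k],\hat{x}_i[k-1]\}$ for $k\ge 1$, there exist constants $C>0$ and $\rho\in(0,1)$, independent of the malicious inputs, such that $V(k)\le C\rho^{k}V(1)$ for all $k\ge 1$; in particular the normal agents' positions converge to a common limit exponentially fast.
   Context: Graphs. A digraph $\mathcal{G}=(\mathcal{V},\mathcal{E})$ has node set $\mathcal{V}=\{1,\dots,n\}$, $n>1$, and edge set $\mathcal{E}\subseteq\mathcal{V}\times\mathcal{V}$ without self-loops; $(j,i)\in\mathcal{E}$ means node $i$ receives information from node $j$. The neighbor set of $i$ is $\mathcal{N}_i=\{j:(j,i)\in\mathcal{E}\}$. For $\mathcal{S}'\subseteq\mathcal{V}$ and integer $r$, let $\mathcal{X}^r_{\mathcal{S}'}$ be the set of nodes in $\mathcal{S}'$ having at least $r$ in-neighbors outside $\mathcal{S}'$. The digraph is $(r,s)$-robust if for every pair of nonempty disjoint subsets $\mathcal{S}_1,\mathcal{S}_2\subset\mathcal{V}$ at least one holds: (1) $\mathcal{X}^r_{\mathcal{S}_1}=\mathcal{S}_1$; (2) $\mathcal{X}^r_{\mathcal{S}_2}=\mathcal{S}_2$;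 (3) $|\mathcal{X}^r_{\mathcal{S}_1}|+|\mathcal{X}^r_{\mathcal{S}_2}|\ge s$. Weights. Fix $\gamma>0$ and weights $a_{ij}\in[\gamma,1)$ for $(j,i)\in\mathcal{E}$ with $\sum_{j\in\mathcal{N}_i}a_{ij}\le 1$ for every $i$. Agents. Each agent $i$ has position $\hat{x}_i[k]\in\mathbb{R}$ and velocity $v_i[k]\in\mathbb{R}$ with dynamics $\hat{x}_i[k+1]=\hat{x}_i[k]+Tv_i[k]+\frac{T^2}{2}u_i[k]$, $v_i[k+1]=v_i[k]+Tu_i[k]$. Malicious agents $i\in\mathcal{M}$ use arbitrary inputs; normal agents use $u_i[k]=-\sum_{j\in\mathcal{N}_i}a_{ij}[k](\hat{x}_i[k]-\hat{x}_j[k])-\alpha v_i[k]$ with $a_{ij}[k]$ from the DP-MSR algorithm. DP-MSR algorithm (parameter $f$), synchronous: at each time $k$, each normal agent $i$ considers the relative positions $\hat{x}_j[k]-\hat{x}_i[k]$, $j\in\mathcal{N}_i$. If fewer than $f$ neighbors have relative value $\ge 0$, it ignores all of those; otherwise it ignores $f$ neighbors with the largest relative values. Similarly for values $\le 0$ and the $f$ smallest. Then $a_{ij}[k]=0$ for ignored neighbors and $a_{ij}[k]=a_{ij}$ otherwise. $f$-total malicious model: $|\mathcal{M}|\le f$. Resilient consensus: for every admissible $\mathcal{M}$, all initial conditions and all malicious inputs, the normal agents' positions stay in a bounded interval determined by the normal agents' initial data and converge to a common value in it, and their velocities converge to $0$. *)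

theory Defs
  imports Complex_Main
begin

text \<open>Nodes are 1..n; an edge (j,i) in E means node i receives information from node j.\<close>

definition nbrs :: "(nat \<times> nat) set \<Rightarrow> nat \<Rightarrow> nat set" where
  "nbrs E i = {j. (j, i) \<in> E}"

definition digraph :: "nat \<Rightarrow> (nat \<times> nat) set \<Rightarrow> bool" where
  "digraph n E \<longleftrightarrow> 1 < n \<and> E \<subseteq> {1..n} \<times> {1..n} \<and> (\<forall>i. (i, i) \<notin> E)"

definition reach_set :: "(nat \<times> nat) set \<Rightarrow> nat \<Rightarrow> nat set \<Rightarrow> nat set" where
  "reach_set E r S = {i \<in> S. r \<le> card (nbrs E i - S)}"

definition robust :: "nat \<Rightarrow> (nat \<times> nat) set \<Rightarrow> nat \<Rightarrow> nat \<Rightarrow> bool" where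
  "robust n E r s \<longleftrightarrow>
     (\<forall>S1 S2. S1 \<subseteq> {1..n} \<longrightarrow> S2 \<subseteq> {1..n} \<longrightarrow> S1 \<noteq> {} \<longrightarrow> S2 \<noteq> {} \<longrightarrow> S1 \<inter> S2 = {} \<longrightarrow>
        reach_set E r S1 = S1 \<or> reach_set E r S2 = S2 \<or>
        s \<le> card (reach_set E r S1) + card (reach_set E r S2))"

definition admissible_weights ::
  "nat \<Rightarrow> (nat \<times> nat) set \<Rightarrow> real \<Rightarrow> (nat \<Rightarrow> nat \<Rightarrow> real) \<Rightarrow> bool" where
  "admissible_weights n E \<gamma> a \<longleftrightarrow> 0 < \<gamma> \<and>
     (\<forall>i j. (j, i) \<in> E \<longrightarrow> \<gamma> \<le> a i j \<and> a i j < 1) \<and>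
     (\<forall>i \<in> {1..n}. (\<Sum>j \<in> nbrs E i. a i j) \<le> 1)"

text \<open>Ties are broken arbitrarily (any valid choice is allowed).\<close>
definition upper_removed :: "nat \<Rightarrow> nat set \<Rightarrow> (nat \<Rightarrow> real) \<Rightarrow> nat set \<Rightarrow> bool" where
  "upper_removed f Nb r U \<longleftrightarrow>
     (if card {j \<in> Nb. 0 \<le> r j} < f then U = {j \<in> Nb. 0 \<le> r j}
      else U \<subseteq> {j \<in> Nb. 0 \<le> r j} \<and> card U = f \<and> (\<forall>j \<in> U. \<forall>l \<in> Nb - U. r l \<le> r j))"

definition lower_removed :: "nat \<Rightarrow> nat set \<Rightarrow> (nat \<Rightarrow> real) \<Rightarrow> nat set \<Rightarrow> bool" where
  "lower_removed f Nb r L \<longleftrightarrow>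
     (if card {j \<in> Nb. r j \<le> 0} < f then L = {j \<in> Nb. r j \<le> 0}
      else L \<subseteq> {j \<in> Nb. r j \<le> 0} \<and> card L = f \<and> (\<forall>j \<in> L. \<forall>l \<in> Nb - L. r j \<le> r l))"

text \<open>A trajectory of the network: x k i, v k i, u k i are position, velocity and input of
  agent i at time k.\<close>
definition dpmsr_traj ::
  "nat \<Rightarrow> (nat \<times> nat) set \<Rightarrow> (nat \<Rightarrow> nat \<Rightarrow> real) \<Rightarrow> nat \<Rightarrow> real \<Rightarrow> real \<Rightarrow> nat set \<Rightarrow>
   (nat \<Rightarrow> nat \<Rightarrow> real) \<Rightarrow> (nat \<Rightarrow> nat \<Rightarrow> real) \<Rightarrow> (nat \<Rightarrow> nat \<Rightarrow> real) \<Rightarrow> bool" where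
  "dpmsr_traj n E a f T \<alpha> M x v u \<longleftrightarrow>
     (\<forall>k. \<forall>i \<in> {1..n}.
        x (Suc k) i = x k i + T * v k i + T\<^sup>2 / 2 * u k i \<and>
        v (Suc k) i = v k i + T * u k i) \<and>
     (\<forall>k. \<forall>i \<in> {1..n} - M. \<exists>U L.
        upper_removed f (nbrs E i) (\<lambda>j. x k j - x k i) U \<and>
        lower_removed f (nbrs E i) (\<lambda>j. x k j - x k i) L \<and>
        u k i = - (\<Sum>j \<in> nbrs E i - (U \<union> L). a i j * (x k i - x k j)) - \<alpha> * v k i)"

text \<open>V(k) for k \<ge> 1, over the set Nn of normal agents.\<close>
definition Vfun :: "nat set \<Rightarrow> (nat \<Rightarrow> nat \<Rightarrow> real) \<Rightarrow> nat \<Rightarrow> real" where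
  "Vfun Nn x k = Max ((\<lambda>i. max (x k i) (x (k - 1) i)) ` Nn)
               - Min ((\<lambda>i. min (x k i) (x (k - 1) i)) ` Nn)"

end

theory Submission imports Defs begin

lemma anch_up_real: fixes X y w dl \<eta> hi v :: real
  assumes "y \<le> (1-\<eta>)*hi + \<eta>*v" "X - hi \<le> w*(y - hi)" "dl \<le> w" "0 \<le> dl" "0 \<le> \<eta>" "v \<le> hi"
  shows "X \<le> (1 - dl*\<eta>)*hi + (dl*\<eta>)*v"
proof -
  have Z: "y - hi \<le> \<eta>*(v - hi)" using assms(1) by (simp add: algebra_simps)
  have Z0: "\<eta>*(v - hi) \<le> 0" using assms(5,6) by (simp add: mult_nonneg_nonpos)
  have w0: "0 \<le> w" using assms(3,4) by linarith
  have "w*(y - hi) \<le> w*(\<eta>*(v - hi))" using Z w0 by (rule mult_left_mono)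
  also have "\<dots> \<le> dl*(\<eta>*(v - hi))" using assms(3) Z0 by (rule mult_right_mono_neg)
  finally have "X - hi \<le> dl*(\<eta>*(v - hi))" using assms(2) by linarith
  then show ?thesis by (simp add: algebra_simps)
qed

lemma anch_lo_real: fixes X y w dl \<eta> lo v :: real
  assumes "(1-\<eta>)*lo + \<eta>*v \<le> y" "w*(y - lo) \<le> X - lo" "dl \<le> w" "0 \<le> dl" "0 \<le> \<eta>" "lo \<le> v"
  shows "(1 - dl*\<eta>)*lo + (dl*\<eta>)*v \<le> X"
proof -
  have Z: "\<eta>*(v - lo) \<le> y - lo" using assms(1) by (simp add: algebra_simps)
  have Z0: "0 \<le> \<eta>*(v - lo)" using assms(5,6) by simp
  have w0: "0 \<le> w" using assms(3,4) by linarith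
  have "dl*(\<eta>*(v - lo)) \<le> w*(\<eta>*(v - lo))" using assms(3) Z0 by (rule mult_right_mono)
  also have "\<dots> \<le> w*(y - lo)" using Z w0 by (rule mult_left_mono)
  finally have "dl*(\<eta>*(v - lo)) \<le> X - lo" using assms(2) by linarith
  then show ?thesis by (simp add: algebra_simps)
qed

definition NN0 :: "nat \<Rightarrow> (nat \<times> nat) set \<Rightarrow> nat" where "NN0 n E = 2 * card E + n + 3"
definition eta :: "real \<Rightarrow> real \<Rightarrow> nat \<Rightarrow> (nat \<times> nat) set \<Rightarrow> real" where
  "eta T \<gamma> n E = (T\<^sup>2/2 * min \<gamma> 1) ^ NN0 n E / 2"

locale sys =
  fixes n f :: nat and E :: "(nat \<times> nat) set" and a :: "nat \<Rightarrow> nat \<Rightarrow> real"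
    and \<gamma> T \<alpha> :: real and M :: "nat set" and x v u :: "nat \<Rightarrow> nat \<Rightarrow> real"
  assumes dg: "digraph n E" and aw: "admissible_weights n E \<gamma> a"
    and rb: "robust n E (f + 1) (f + 1)" and T0: "0 < T"
    and al1: "1 + T\<^sup>2 / 2 \<le> \<alpha> * T" and al2: "\<alpha> * T \<le> 2 - T\<^sup>2 / 2"
    and MS: "M \<subseteq> {1..n}" and cM: "card M \<le> f" and tr: "dpmsr_traj n E a f T \<alpha> M x v u"
begin

definition "NN = {1..n} - M"

lemma finM: "finite M" using MS finite_subset by blast

lemma nbrs_sub: "nbrs E i \<subseteq> {1..n}"
  using dg unfolding digraph_def nbrs_def by auto

lemma fin_nbrs: "finite (nbrs E i)" using nbrs_sub finite_subset by blast

definition "ULp k i = (SOME p. upper_removed f (nbrs E i) (\<lambda>j. x k j - x k i) (fst p) \<and>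
   lower_removed f (nbrs E i) (\<lambda>j. x k j - x k i) (snd p) \<and>
   u k i = - (\<Sum>j \<in> nbrs E i - (fst p \<union> snd p). a i j * (x k i - x k j)) - \<alpha> * v k i)"

definition "K k i = nbrs E i - (fst (ULp k i) \<union> snd (ULp k i))"

lemma ULp_spec: assumes "i \<in> NN"
  shows "upper_removed f (nbrs E i) (\<lambda>j. x k j - x k i) (fst (ULp k i)) \<and>
   lower_removed f (nbrs E i) (\<lambda>j. x k j - x k i) (snd (ULp k i)) \<and>
   u k i = - (\<Sum>j \<in> K k i. a i j * (x k i - x k j)) - \<alpha> * v k i"
proof -
  from tr assms obtain U L where "upper_removed f (nbrs E i) (\<lambda>j. x k j - x k i) U \<and>
        lower_removed f (nbrs E i) (\<lambda>j. x k j - x k i) L \<and>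
        u k i = - (\<Sum>j \<in> nbrs E i - (U \<union> L). a i j * (x k i - x k j)) - \<alpha> * v k i"
    unfolding dpmsr_traj_def NN_def by blast
  then have "\<exists>p. upper_removed f (nbrs E i) (\<lambda>j. x k j - x k i) (fst p) \<and>
   lower_removed f (nbrs E i) (\<lambda>j. x k j - x k i) (snd p) \<and>
   u k i = - (\<Sum>j \<in> nbrs E i - (fst p \<union> snd p). a i j * (x k i - x k j)) - \<alpha> * v k i"
    by (intro exI[of _ "(U,L)"]) auto
  from someI_ex[OF this] show ?thesis unfolding ULp_def[symmetric] K_def by blast
qed

lemma K_sub: "K k i \<subseteq> nbrs E i" unfolding K_def by auto
lemma fin_K: "finite (K k i)" using K_sub fin_nbrs finite_subset by blast

lemma kept_le: assumes i: "i \<in> NN" and j: "j \<in> K k i"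
  shows "\<exists>l \<in> NN. x k j \<le> x k l"
proof (cases "x k j \<le> x k i")
  case True then show ?thesis using i by auto
next
  case False
  let ?r = "\<lambda>j. x k j - x k i"
  let ?P = "{j \<in> nbrs E i. 0 \<le> ?r j}"
  define U where "U = fst (ULp k i)"
  have up: "upper_removed f (nbrs E i) ?r U" using ULp_spec[OF i] U_def by blast
  have "j \<in> nbrs E i - (fst (ULp k i) \<union> snd (ULp k i))" using j unfolding K_def .
  then have jn: "j \<in> nbrs E i" "j \<notin> U" unfolding U_def by simp_all
  have jP: "j \<in> ?P" using False jn by auto
  show ?thesis
  proof (cases "card ?P < f")
    case True then have "U = ?P" using up unfolding upper_removed_def by auto
    then show ?thesis using jP jn by auto
  next
    case False
    then have U: "U \<subseteq> ?P" "card U = f" "\<forall>y \<in> U. \<forall>l \<in> nbrs E i - U. ?r l \<le> ?r y"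
      using up unfolding upper_removed_def by auto
    have "U \<subseteq> nbrs E i" using U(1) by blast
    then have fU: "finite U" by (rule finite_subset) (rule fin_nbrs)
    have c: "card (insert j U) = f + 1" using fU jn U(2) by simp
    have "\<not> insert j U \<subseteq> M"
    proof
      assume "insert j U \<subseteq> M"
      then have "card (insert j U) \<le> card M" using finM card_mono by blast
      then show False using c cM by simp
    qed
    then obtain y where y: "y \<in> insert j U" "y \<notin> M" by blast
    have "y \<in> nbrs E i" using y U(1) jn by auto
    then have "y \<in> NN" using y(2) nbrs_sub unfolding NN_def by blast
    moreover have "x k j \<le> x k y"
    proof (cases "y = j")
      case False then have "y \<in> U" using y by auto
      then show ?thesis using U(3) jn by force
    qed simp
    ultimately show ?thesis by blast
  qed
qed

lemma kept_ge: assumes i: "i \<in> NN" and j: "j \<in> K k i"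
  shows "\<exists>l \<in> NN. x k l \<le> x k j"
proof (cases "x k i \<le> x k j")
  case True then show ?thesis using i by auto
next
  case False
  let ?r = "\<lambda>j. x k j - x k i"
  let ?P = "{j \<in> nbrs E i. ?r j \<le> 0}"
  define U where "U = snd (ULp k i)"
  have up: "lower_removed f (nbrs E i) ?r U" using ULp_spec[OF i] U_def by blast
  have "j \<in> nbrs E i - (fst (ULp k i) \<union> snd (ULp k i))" using j unfolding K_def .
  then have jn: "j \<in> nbrs E i" "j \<notin> U" unfolding U_def by simp_all
  have jP: "j \<in> ?P" using False jn by auto
  show ?thesis
  proof (cases "card ?P < f")
    case True then have "U = ?P" using up unfolding lower_removed_def by auto
    then show ?thesis using jP jn by auto
  next
    case False
    then have U: "U \<subseteq> ?P" "card U = f" "\<forall>y \<in> U. \<forall>l \<in> nbrs E i - U. ?r y \<le> ?r l"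
      using up unfolding lower_removed_def by auto
    have "U \<subseteq> nbrs E i" using U(1) by blast
    then have fU: "finite U" by (rule finite_subset) (rule fin_nbrs)
    have c: "card (insert j U) = f + 1" using fU jn U(2) by simp
    have "\<not> insert j U \<subseteq> M"
    proof
      assume "insert j U \<subseteq> M"
      then have "card (insert j U) \<le> card M" using finM card_mono by blast
      then show False using c cM by simp
    qed
    then obtain y where y: "y \<in> insert j U" "y \<notin> M" by blast
    have "y \<in> nbrs E i" using y U(1) jn by auto
    then have "y \<in> NN" using y(2) nbrs_sub unfolding NN_def by blast
    moreover have "x k y \<le> x k j"
    proof (cases "y = j")
      case False then have "y \<in> U" using y by auto
      then show ?thesis using U(3) jn by force
    qed simp
    ultimately show ?thesis by blast
  qed
qed


lemma kept_exists: assumes i: "i \<in> NN" and W: "W \<subseteq> nbrs E i" "f + 1 \<le> card W"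
    and lt: "\<forall>j \<in> W. x k j < x k i"
  shows "\<exists>j \<in> W. j \<in> K k i"
proof (rule ccontr)
  assume ne: "\<not> (\<exists>j \<in> W. j \<in> K k i)"
  let ?r = "\<lambda>j. x k j - x k i"
  define U where "U = fst (ULp k i)"
  define L where "L = snd (ULp k i)"
  have up: "upper_removed f (nbrs E i) ?r U" using ULp_spec[OF i] U_def by blast
  have lo: "lower_removed f (nbrs E i) ?r L" using ULp_spec[OF i] L_def by blast
  have U1: "U \<subseteq> {j \<in> nbrs E i. 0 \<le> ?r j}"
  proof (cases "card {j \<in> nbrs E i. 0 \<le> ?r j} < f")
    case True then show ?thesis using up unfolding upper_removed_def by simp
  next
    case False then show ?thesis using up unfolding upper_removed_def by simp
  qed
  have "L \<subseteq> {j \<in> nbrs E i. ?r j \<le> 0}"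
  proof (cases "card {j \<in> nbrs E i. ?r j \<le> 0} < f")
    case True then show ?thesis using lo unfolding lower_removed_def by simp
  next
    case False then show ?thesis using lo unfolding lower_removed_def by simp
  qed
  then have Lsub: "L \<subseteq> nbrs E i" by blast
  have fL: "finite L" using Lsub by (rule finite_subset) (rule fin_nbrs)
  have cL: "card L \<le> f"
  proof (cases "card {j \<in> nbrs E i. ?r j \<le> 0} < f")
    case True then show ?thesis using lo unfolding lower_removed_def by simp
  next
    case False then show ?thesis using lo unfolding lower_removed_def by simp
  qed
  have "W \<subseteq> L"
  proof
    fix j assume jW: "j \<in> W"
    then have "j \<notin> K k i" using ne by blast
    then have "j \<notin> nbrs E i - (U \<union> L)" unfolding K_def U_def L_def .
    moreover have "j \<in> nbrs E i" using jW W(1) by blast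
    moreover have "j \<notin> U" using U1 lt jW by force
    ultimately show "j \<in> L" by blast
  qed
  then have "card W \<le> card L" using fL by (rule card_mono[rotated])
  then show False using cL W(2) by simp
qed

lemma kept_exists2: assumes i: "i \<in> NN" and W: "W \<subseteq> nbrs E i" "f + 1 \<le> card W"
    and lt: "\<forall>j \<in> W. x k i < x k j"
  shows "\<exists>j \<in> W. j \<in> K k i"
proof (rule ccontr)
  assume ne: "\<not> (\<exists>j \<in> W. j \<in> K k i)"
  let ?r = "\<lambda>j. x k j - x k i"
  define U where "U = fst (ULp k i)"
  define L where "L = snd (ULp k i)"
  have up: "upper_removed f (nbrs E i) ?r U" using ULp_spec[OF i] U_def by blast
  have lo: "lower_removed f (nbrs E i) ?r L" using ULp_spec[OF i] L_def by blast
  have L1: "L \<subseteq> {j \<in> nbrs E i. ?r j \<le> 0}"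
  proof (cases "card {j \<in> nbrs E i. ?r j \<le> 0} < f")
    case True then show ?thesis using lo unfolding lower_removed_def by simp
  next
    case False then show ?thesis using lo unfolding lower_removed_def by simp
  qed
  have "U \<subseteq> {j \<in> nbrs E i. 0 \<le> ?r j}"
  proof (cases "card {j \<in> nbrs E i. 0 \<le> ?r j} < f")
    case True then show ?thesis using up unfolding upper_removed_def by simp
  next
    case False then show ?thesis using up unfolding upper_removed_def by simp
  qed
  then have Usub: "U \<subseteq> nbrs E i" by blast
  have fU: "finite U" using Usub by (rule finite_subset) (rule fin_nbrs)
  have cU: "card U \<le> f"
  proof (cases "card {j \<in> nbrs E i. 0 \<le> ?r j} < f")
    case True then show ?thesis using up unfolding upper_removed_def by simp
  next
    case False then show ?thesis using up unfolding upper_removed_def by simp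
  qed
  have "W \<subseteq> U"
  proof
    fix j assume jW: "j \<in> W"
    then have "j \<notin> K k i" using ne by blast
    then have "j \<notin> nbrs E i - (U \<union> L)" unfolding K_def U_def L_def .
    moreover have "j \<in> nbrs E i" using jW W(1) by blast
    moreover have "j \<notin> L" using L1 lt jW by force
    ultimately show "j \<in> U" by blast
  qed
  then have "card W \<le> card U" using fU by (rule card_mono[rotated])
  then show False using cU W(2) by simp
qed

lemma K_strict: assumes i: "i \<in> NN" and f1: "1 \<le> f" and j0: "j0 \<in> nbrs E i"
  shows "\<exists>j \<in> nbrs E i. j \<notin> K k i"
proof -
  let ?r = "\<lambda>j. x k j - x k i"
  define U where "U = fst (ULp k i)"
  define L where "L = snd (ULp k i)"
  have up: "upper_removed f (nbrs E i) ?r U" using ULp_spec[OF i] U_def by blast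
  have lo: "lower_removed f (nbrs E i) ?r L" using ULp_spec[OF i] L_def by blast
  have "\<exists>j \<in> nbrs E i. j \<in> U \<or> j \<in> L"
  proof (cases "0 \<le> ?r j0")
    case True
    show ?thesis
    proof (cases "card {j \<in> nbrs E i. 0 \<le> ?r j} < f")
      case c: True
      then have "U = {j \<in> nbrs E i. 0 \<le> ?r j}" using up unfolding upper_removed_def by simp
      then show ?thesis using True j0 by blast
    next
      case c: False
      then have "U \<subseteq> {j \<in> nbrs E i. 0 \<le> ?r j}" "card U = f"
        using up unfolding upper_removed_def by simp_all
      moreover then have "U \<noteq> {}" using f1 by (metis card.empty not_one_le_zero)
      ultimately show ?thesis by blast
    qed
  next
    case False
    then have F: "?r j0 \<le> 0" by simp
    show ?thesis
    proof (cases "card {j \<in> nbrs E i. ?r j \<le> 0} < f")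
      case c: True
      then have "L = {j \<in> nbrs E i. ?r j \<le> 0}" using lo unfolding lower_removed_def by simp
      then show ?thesis using F j0 by blast
    next
      case c: False
      then have "L \<subseteq> {j \<in> nbrs E i. ?r j \<le> 0}" "card L = f"
        using lo unfolding lower_removed_def by simp_all
      moreover then have "L \<noteq> {}" using f1 by (metis card.empty not_one_le_zero)
      ultimately show ?thesis by blast
    qed
  qed
  then obtain j where "j \<in> nbrs E i" "j \<in> U \<or> j \<in> L" by blast
  then show ?thesis unfolding K_def U_def L_def by blast
qed

lemma a_bnd: assumes "j \<in> nbrs E i" shows "\<gamma> \<le> a i j" "a i j < 1"
  using aw assms unfolding admissible_weights_def nbrs_def by auto

lemma gam0: "0 < \<gamma>" using aw unfolding admissible_weights_def by simp

lemma a_nn: assumes "j \<in> nbrs E i" shows "0 \<le> a i j"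
  using a_bnd(1)[OF assms] gam0 by linarith

definition "S k i = (\<Sum>j \<in> K k i. a i j)"

lemma NN_sub: "NN \<subseteq> {1..n}" unfolding NN_def by blast

lemma S_nn: "0 \<le> S k i"
  unfolding S_def by (rule sum_nonneg) (use a_nn K_sub in blast)

lemma sum_nbrs_le: assumes "i \<in> NN" shows "(\<Sum>j \<in> nbrs E i. a i j) \<le> 1"
  using aw assms NN_sub unfolding admissible_weights_def by blast

lemma S_le1: assumes "i \<in> NN" shows "S k i \<le> 1"
proof -
  have "S k i \<le> (\<Sum>j \<in> nbrs E i. a i j)"
    unfolding S_def by (rule sum_mono2[OF fin_nbrs K_sub]) (use a_nn in blast)
  then show ?thesis using sum_nbrs_le[OF assms] by linarith
qed

lemma S_le: assumes i: "i \<in> NN" and f1: "1 \<le> f" shows "S k i \<le> 1 - min \<gamma> 1"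
proof (cases "nbrs E i = {}")
  case True then have "K k i = {}" using K_sub by blast
  then show ?thesis unfolding S_def by simp
next
  case False
  then obtain j0 where "j0 \<in> nbrs E i" by blast
  from K_strict[OF i f1 this] obtain j where j: "j \<in> nbrs E i" "j \<notin> K k i" by blast
  have "S k i + a i j = (\<Sum>l \<in> insert j (K k i). a i l)"
    unfolding S_def using j(2) fin_K by simp
  also have "\<dots> \<le> (\<Sum>l \<in> nbrs E i. a i l)"
    by (rule sum_mono2[OF fin_nbrs]) (use j K_sub a_nn in blast)+
  finally show ?thesis using sum_nbrs_le[OF i] a_bnd(1)[OF j(1)] by linarith
qed

definition "w k i = (\<Sum>j \<in> K k i. a i j * (x k j - x k i))"

lemma u_eq: assumes "i \<in> NN" shows "u k i = w k i - \<alpha> * v k i"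
proof -
  have "(\<Sum>j \<in> K k i. a i j * (x k i - x k j)) = - w k i"
    unfolding w_def sum_negf[symmetric] by (rule sum.cong) (simp_all add: algebra_simps)
  then show ?thesis using ULp_spec[OF assms, of k] by simp
qed

lemma dyn: assumes "i \<in> NN"
  shows "x (Suc k) i = x k i + T * v k i + T\<^sup>2 / 2 * u k i" "v (Suc k) i = v k i + T * u k i"
  using tr assms NN_sub unfolding dpmsr_traj_def by blast+

lemma recur: assumes i: "i \<in> NN"
  shows "x (k+2) i = (2 - \<alpha>*T) * x (k+1) i - (1 - \<alpha>*T) * x k i + T\<^sup>2/2 * w (k+1) i + T\<^sup>2/2 * w k i"
proof -
  have e1: "x (Suc k) i = x k i + T * v k i + T\<^sup>2 / 2 * (w k i - \<alpha> * v k i)"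
    using dyn(1)[OF i, of k] u_eq[OF i, of k] by simp
  have e2: "v (Suc k) i = v k i + T * (w k i - \<alpha> * v k i)"
    using dyn(2)[OF i, of k] u_eq[OF i, of k] by simp
  have e3: "x (Suc (Suc k)) i = x (Suc k) i + T * v (Suc k) i + T\<^sup>2 / 2 * (w (Suc k) i - \<alpha> * v (Suc k) i)"
    using dyn(1)[OF i, of "Suc k"] u_eq[OF i, of "Suc k"] by simp
  have "x (Suc (Suc k)) i = (2 - \<alpha>*T) * x (Suc k) i - (1 - \<alpha>*T) * x k i + T\<^sup>2/2 * w (Suc k) i + T\<^sup>2/2 * w k i"
    unfolding e3 e2 e1 by (simp add: field_simps power2_eq_square)
  then show ?thesis by simp
qed

lemma w_eq: "w k i = (\<Sum>j \<in> K k i. a i j * (x k j - B)) - S k i * (x k i - B)"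
  unfolding w_def S_def sum_distrib_right sum_subtractf[symmetric]
  by (rule sum.cong) (simp_all add: algebra_simps)

lemma ident: assumes i: "i \<in> NN"
  shows "x (k+2) i - B = (2 - \<alpha>*T - T\<^sup>2/2 * S (k+1) i) * (x (k+1) i - B)
     + (\<alpha>*T - 1 - T\<^sup>2/2 * S k i) * (x k i - B)
     + T\<^sup>2/2 * (\<Sum>j \<in> K (k+1) i. a i j * (x (k+1) j - B))
     + T\<^sup>2/2 * (\<Sum>j \<in> K k i. a i j * (x k j - B))"
  unfolding recur[OF i] w_eq[of "k+1" i B] w_eq[of k i B] by (simp add: field_simps)



lemma T2: "T\<^sup>2 \<le> 1" using al1 al2 by linarith
lemma T2p: "0 < T\<^sup>2" using T0 by simp

lemma p_nn: assumes i: "i \<in> NN" shows "0 \<le> 2 - \<alpha>*T - T\<^sup>2/2 * S k i"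
proof -
  have "T\<^sup>2/2 * S k i \<le> T\<^sup>2/2 * 1" using S_le1[OF i] T2p by (intro mult_left_mono) auto
  then show ?thesis using al2 by linarith
qed

lemma q_nn: assumes i: "i \<in> NN" shows "0 \<le> \<alpha>*T - 1 - T\<^sup>2/2 * S k i"
proof -
  have "T\<^sup>2/2 * S k i \<le> T\<^sup>2/2 * 1" using S_le1[OF i] T2p by (intro mult_left_mono) auto
  then show ?thesis using al1 by linarith
qed

lemma sum_le_one: assumes "finite A" "j \<in> A" "\<forall>l \<in> A. g l \<le> (0::real)"
  shows "sum g A \<le> g j"
proof -
  have "sum g A = g j + sum g (A - {j})" using assms(1,2) by (rule sum.remove)
  moreover have "sum g (A - {j}) \<le> 0" by (rule sum_nonpos) (use assms(3) in blast)
  ultimately show ?thesis by linarith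
qed

lemma sum_ge_one: assumes "finite A" "j \<in> A" "\<forall>l \<in> A. g l \<ge> (0::real)"
  shows "sum g A \<ge> g j"
proof -
  have "sum g A = g j + sum g (A - {j})" using assms(1,2) by (rule sum.remove)
  moreover have "sum g (A - {j}) \<ge> 0" by (rule sum_nonneg) (use assms(3) in blast)
  ultimately show ?thesis by linarith
qed

definition "Inv t lo hi \<longleftrightarrow> (\<forall>i \<in> NN. lo \<le> x t i \<and> x t i \<le> hi \<and> lo \<le> x (Suc t) i \<and> x (Suc t) i \<le> hi)"

lemma kept_rng: assumes i: "i \<in> NN" and j: "j \<in> K s i" and r: "\<forall>l \<in> NN. lo \<le> x s l \<and> x s l \<le> hi"
  shows "lo \<le> x s j" "x s j \<le> hi"
proof -
  from kept_le[OF i j] obtain l where "l \<in> NN" "x s j \<le> x s l" by blast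
  then show "x s j \<le> hi" using r by force
  from kept_ge[OF i j] obtain l' where "l' \<in> NN" "x s l' \<le> x s j" by blast
  then show "lo \<le> x s j" using r by force
qed

text \<open>Upper-bound decomposition: each term is nonpositive.\<close>
lemma upper_terms: assumes i: "i \<in> NN" and I: "Inv k lo B"
  shows "x (k+2) i - B \<le> (2 - \<alpha>*T - T\<^sup>2/2 * S (k+1) i) * (x (k+1) i - B)"
    and "\<And>j. j \<in> K (k+1) i \<Longrightarrow> x (k+2) i - B \<le> T\<^sup>2/2 * a i j * (x (k+1) j - B)"
    and "\<And>j. j \<in> K k i \<Longrightarrow> x (k+2) i - B \<le> T\<^sup>2/2 * a i j * (x k j - B)"
    and "x (k+2) i \<le> B"
proof -
  let ?p = "2 - \<alpha>*T - T\<^sup>2/2 * S (k+1) i" and ?q = "\<alpha>*T - 1 - T\<^sup>2/2 * S k i"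
  let ?A = "\<Sum>j \<in> K (k+1) i. a i j * (x (k+1) j - B)"
  let ?C = "\<Sum>j \<in> K k i. a i j * (x k j - B)"
  have r0: "\<forall>l \<in> NN. lo \<le> x k l \<and> x k l \<le> B" and r1: "\<forall>l \<in> NN. lo \<le> x (k+1) l \<and> x (k+1) l \<le> B"
    using I unfolding Inv_def by auto
  have id: "x (k+2) i - B = ?p * (x (k+1) i - B) + ?q * (x k i - B) + T\<^sup>2/2 * ?A + T\<^sup>2/2 * ?C"
    by (rule ident[OF i])
  have tA: "\<forall>j \<in> K (k+1) i. a i j * (x (k+1) j - B) \<le> 0"
  proof
    fix j assume j: "j \<in> K (k+1) i"
    have "x (k+1) j \<le> B" using kept_rng(2)[OF i j r1] .
    moreover have "0 \<le> a i j" using a_nn j K_sub by blast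
    ultimately show "a i j * (x (k+1) j - B) \<le> 0" by (simp add: mult_nonneg_nonpos)
  qed
  have tC: "\<forall>j \<in> K k i. a i j * (x k j - B) \<le> 0"
  proof
    fix j assume j: "j \<in> K k i"
    have "x k j \<le> B" using kept_rng(2)[OF i j r0] .
    moreover have "0 \<le> a i j" using a_nn j K_sub by blast
    ultimately show "a i j * (x k j - B) \<le> 0" by (simp add: mult_nonneg_nonpos)
  qed
  have A0: "?A \<le> 0" by (rule sum_nonpos) (use tA in blast)
  have C0: "?C \<le> 0" by (rule sum_nonpos) (use tC in blast)
  have P: "?p * (x (k+1) i - B) \<le> 0" using p_nn[OF i] r1 i by (simp add: mult_nonneg_nonpos)
  have Q: "?q * (x k i - B) \<le> 0" using q_nn[OF i] r0 i by (simp add: mult_nonneg_nonpos)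
  have A': "T\<^sup>2/2 * ?A \<le> 0" using A0 T2p by (simp add: mult_nonneg_nonpos)
  have C': "T\<^sup>2/2 * ?C \<le> 0" using C0 T2p by (simp add: mult_nonneg_nonpos)
  show "x (k+2) i - B \<le> ?p * (x (k+1) i - B)" using id Q A' C' by linarith
  show "x (k+2) i \<le> B" using id P Q A' C' by linarith
  show "\<And>j. j \<in> K (k+1) i \<Longrightarrow> x (k+2) i - B \<le> T\<^sup>2/2 * a i j * (x (k+1) j - B)"
  proof -
    fix j assume j: "j \<in> K (k+1) i"
    have "?A \<le> a i j * (x (k+1) j - B)" by (rule sum_le_one[OF fin_K j tA])
    then have "T\<^sup>2/2 * ?A \<le> T\<^sup>2/2 * (a i j * (x (k+1) j - B))" using T2p by simp
    then show "x (k+2) i - B \<le> T\<^sup>2/2 * a i j * (x (k+1) j - B)" using id P Q C' by simp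
  qed
  show "\<And>j. j \<in> K k i \<Longrightarrow> x (k+2) i - B \<le> T\<^sup>2/2 * a i j * (x k j - B)"
  proof -
    fix j assume j: "j \<in> K k i"
    have "?C \<le> a i j * (x k j - B)" by (rule sum_le_one[OF fin_K j tC])
    then have "T\<^sup>2/2 * ?C \<le> T\<^sup>2/2 * (a i j * (x k j - B))" using T2p by simp
    then show "x (k+2) i - B \<le> T\<^sup>2/2 * a i j * (x k j - B)" using id P Q A' by simp
  qed
qed

lemma lower_terms: assumes i: "i \<in> NN" and I: "Inv k B hi"
  shows "x (k+2) i - B \<ge> (2 - \<alpha>*T - T\<^sup>2/2 * S (k+1) i) * (x (k+1) i - B)"
    and "\<And>j. j \<in> K (k+1) i \<Longrightarrow> x (k+2) i - B \<ge> T\<^sup>2/2 * a i j * (x (k+1) j - B)"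
    and "\<And>j. j \<in> K k i \<Longrightarrow> x (k+2) i - B \<ge> T\<^sup>2/2 * a i j * (x k j - B)"
    and "x (k+2) i \<ge> B"
proof -
  let ?p = "2 - \<alpha>*T - T\<^sup>2/2 * S (k+1) i" and ?q = "\<alpha>*T - 1 - T\<^sup>2/2 * S k i"
  let ?A = "\<Sum>j \<in> K (k+1) i. a i j * (x (k+1) j - B)"
  let ?C = "\<Sum>j \<in> K k i. a i j * (x k j - B)"
  have r0: "\<forall>l \<in> NN. B \<le> x k l \<and> x k l \<le> hi" and r1: "\<forall>l \<in> NN. B \<le> x (k+1) l \<and> x (k+1) l \<le> hi"
    using I unfolding Inv_def by auto
  have id: "x (k+2) i - B = ?p * (x (k+1) i - B) + ?q * (x k i - B) + T\<^sup>2/2 * ?A + T\<^sup>2/2 * ?C"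
    by (rule ident[OF i])
  have tA: "\<forall>j \<in> K (k+1) i. a i j * (x (k+1) j - B) \<ge> 0"
  proof
    fix j assume j: "j \<in> K (k+1) i"
    have "x (k+1) j \<ge> B" using kept_rng(1)[OF i j r1] .
    moreover have "0 \<le> a i j" using a_nn j K_sub by blast
    ultimately show "a i j * (x (k+1) j - B) \<ge> 0" by simp
  qed
  have tC: "\<forall>j \<in> K k i. a i j * (x k j - B) \<ge> 0"
  proof
    fix j assume j: "j \<in> K k i"
    have "x k j \<ge> B" using kept_rng(1)[OF i j r0] .
    moreover have "0 \<le> a i j" using a_nn j K_sub by blast
    ultimately show "a i j * (x k j - B) \<ge> 0" by simp
  qed
  have A0: "?A \<ge> 0" by (rule sum_nonneg) (use tA in blast)
  have C0: "?C \<ge> 0" by (rule sum_nonneg) (use tC in blast)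
  have P: "?p * (x (k+1) i - B) \<ge> 0" using p_nn[OF i] r1 i by simp
  have Q: "?q * (x k i - B) \<ge> 0" using q_nn[OF i] r0 i by simp
  have A': "T\<^sup>2/2 * ?A \<ge> 0" using A0 T2p by simp
  have C': "T\<^sup>2/2 * ?C \<ge> 0" using C0 T2p by simp
  show "x (k+2) i - B \<ge> ?p * (x (k+1) i - B)" using id Q A' C' by linarith
  show "x (k+2) i \<ge> B" using id P Q A' C' by linarith
  show "\<And>j. j \<in> K (k+1) i \<Longrightarrow> x (k+2) i - B \<ge> T\<^sup>2/2 * a i j * (x (k+1) j - B)"
  proof -
    fix j assume j: "j \<in> K (k+1) i"
    have "?A \<ge> a i j * (x (k+1) j - B)" by (rule sum_ge_one[OF fin_K j tA])
    then have "T\<^sup>2/2 * ?A \<ge> T\<^sup>2/2 * (a i j * (x (k+1) j - B))" using T2p by simp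
    then show "x (k+2) i - B \<ge> T\<^sup>2/2 * a i j * (x (k+1) j - B)" using id P Q C' by simp
  qed
  show "\<And>j. j \<in> K k i \<Longrightarrow> x (k+2) i - B \<ge> T\<^sup>2/2 * a i j * (x k j - B)"
  proof -
    fix j assume j: "j \<in> K k i"
    have "?C \<ge> a i j * (x k j - B)" by (rule sum_ge_one[OF fin_K j tC])
    then have "T\<^sup>2/2 * ?C \<ge> T\<^sup>2/2 * (a i j * (x k j - B))" using T2p by simp
    then show "x (k+2) i - B \<ge> T\<^sup>2/2 * a i j * (x k j - B)" using id P Q A' by simp
  qed
qed

lemma Inv_step: assumes "Inv k lo hi" shows "Inv (Suc k) lo hi"
proof -
  have "\<forall>i \<in> NN. lo \<le> x (k+2) i \<and> x (k+2) i \<le> hi"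
    using upper_terms(4)[OF _ assms] lower_terms(4)[OF _ assms] by blast
  then show ?thesis using assms unfolding Inv_def by simp
qed

lemma Inv_mono: assumes "Inv k lo hi" shows "Inv (k + d) lo hi"
  by (induction d) (use assms Inv_step in auto)



lemma n2: "2 \<le> n" using dg unfolding digraph_def by simp

lemma f_lt_n: "f < n"
proof -
  have ne: "{1::nat} \<noteq> {}" "{2::nat} \<noteq> {}" "{1::nat} \<inter> {2} = {}" by auto
  have sub: "{1::nat} \<subseteq> {1..n}" "{2::nat} \<subseteq> {1..n}" using n2 by auto
  have cr: "card (nbrs E l - {l}) \<le> n - 1" if "l \<in> {1..n}" for l
  proof -
    have "nbrs E l - {l} \<subseteq> {1..n} - {l}" using nbrs_sub by blast
    then have "card (nbrs E l - {l}) \<le> card ({1..n} - {l})" by (rule card_mono[rotated]) simp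
    also have "\<dots> = n - 1" using that by simp
    finally show ?thesis .
  qed
  from rb sub ne have
    "reach_set E (f+1) {1} = {1} \<or> reach_set E (f+1) {2} = {2} \<or>
     f + 1 \<le> card (reach_set E (f+1) {1}) + card (reach_set E (f+1) {2})"
    unfolding robust_def by blast
  then show ?thesis
  proof (elim disjE)
    assume "reach_set E (f+1) {1} = {1}"
    then have "f + 1 \<le> card (nbrs E 1 - {1})" unfolding reach_set_def by blast
    then show ?thesis using cr[of 1] n2 by simp
  next
    assume "reach_set E (f+1) {2} = {2}"
    then have "f + 1 \<le> card (nbrs E 2 - {2})" unfolding reach_set_def by blast
    then show ?thesis using cr[of 2] n2 by simp
  next
    assume h: "f + 1 \<le> card (reach_set E (f+1) {1}) + card (reach_set E (f+1) {2})"
    have cl: "card (reach_set E (f+1) {l}) \<le> 1" for l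
    proof -
      have "reach_set E (f+1) {l} \<subseteq> {l}" unfolding reach_set_def by blast
      then have "card (reach_set E (f+1) {l}) \<le> card {l}" by (rule card_mono[rotated]) simp
      then show ?thesis by simp
    qed
    have "f + 1 \<le> 2" using h cl[of 1] cl[of 2] by linarith
    then show ?thesis using n2 by linarith
  qed
qed

lemma NN_ne: "NN \<noteq> {}"
proof
  assume "NN = {}"
  then have "{1..n} \<subseteq> M" unfolding NN_def by blast
  then have "card {1..n} \<le> card M" using finM by (rule card_mono[rotated])
  then show False using cM f_lt_n by simp
qed

lemma fin_NN: "finite NN" unfolding NN_def by simp

definition "hiP t = Max ((\<lambda>i. max (x (Suc t) i) (x t i)) ` NN)"
definition "loP t = Min ((\<lambda>i. min (x (Suc t) i) (x t i)) ` NN)"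

lemma V_eq: "Vfun NN x (Suc t) = hiP t - loP t"
  unfolding Vfun_def hiP_def loP_def by simp

lemma Inv_P: "Inv t (loP t) (hiP t)"
  unfolding Inv_def
proof
  fix i assume i: "i \<in> NN"
  have "max (x (Suc t) i) (x t i) \<le> hiP t" unfolding hiP_def
    by (rule Max_ge) (use fin_NN i in auto)
  moreover have "min (x (Suc t) i) (x t i) \<ge> loP t" unfolding loP_def
    by (rule Min_le) (use fin_NN i in auto)
  ultimately show "loP t \<le> x t i \<and> x t i \<le> hiP t \<and> loP t \<le> x (Suc t) i \<and> x (Suc t) i \<le> hiP t"
    by simp
qed

lemma P_of_Inv: assumes "Inv t lo hi" shows "lo \<le> loP t" "hiP t \<le> hi"
proof -
  show "hiP t \<le> hi" unfolding hiP_def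
    by (subst Max_le_iff) (use fin_NN NN_ne assms in \<open>auto simp: Inv_def\<close>)
  show "lo \<le> loP t" unfolding loP_def
    by (subst Min_ge_iff) (use fin_NN NN_ne assms in \<open>auto simp: Inv_def\<close>)
qed

lemma P_mono: "loP t \<le> loP (t + d)" "hiP (t + d) \<le> hiP t"
  using P_of_Inv[OF Inv_mono[OF Inv_P]] by auto

lemma P_le: "loP t \<le> hiP t"
proof -
  obtain i where "i \<in> NN" using NN_ne by blast
  then show ?thesis using Inv_P[of t] unfolding Inv_def by force
qed



definition "dl = T\<^sup>2/2 * min \<gamma> 1"

lemma dl_pos: "0 < dl" unfolding dl_def using T2p gam0 by simp
lemma dl_le: "dl \<le> 1/2"
proof -
  have "T\<^sup>2/2 * min \<gamma> 1 \<le> 1/2 * 1" using T2 T2p gam0 by (intro mult_mono) auto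
  then show ?thesis unfolding dl_def by simp
qed
lemma dl_le_a: assumes "j \<in> nbrs E i" shows "dl \<le> T\<^sup>2/2 * a i j"
proof -
  have "min \<gamma> 1 \<le> a i j" using a_bnd(1)[OF assms] by linarith
  then show ?thesis unfolding dl_def using T2p by simp
qed
lemma dl_le_p: assumes i: "i \<in> NN" and f1: "1 \<le> f" shows "dl \<le> 2 - \<alpha>*T - T\<^sup>2/2 * S k i"
proof -
  have "T\<^sup>2/2 * S k i \<le> T\<^sup>2/2 * (1 - min \<gamma> 1)" using S_le[OF i f1] T2p by simp
  then show ?thesis using al2 unfolding dl_def by (simp add: algebra_simps)
qed

lemma out_stays_hi: assumes f1: "1 \<le> f" and i: "i \<in> NN" and I: "Inv k lo hi"
    and xi: "x (k+1) i \<le> hi - e" and e: "0 \<le> e"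
  shows "x (k+2) i \<le> hi - dl * e"
proof -
  let ?p = "2 - \<alpha>*T - T\<^sup>2/2 * S (k+1) i"
  have "x (k+2) i - hi \<le> ?p * (x (k+1) i - hi)" by (rule upper_terms(1)[OF i I])
  also have "\<dots> \<le> dl * (x (k+1) i - hi)"
    by (rule mult_right_mono_neg) (use dl_le_p[OF i f1] xi e in auto)
  also have "\<dots> \<le> dl * (- e)" using dl_pos xi by (intro mult_left_mono) auto
  finally show ?thesis by simp
qed

lemma out_stays_lo: assumes f1: "1 \<le> f" and i: "i \<in> NN" and I: "Inv k lo hi"
    and xi: "x (k+1) i \<ge> lo + e" and e: "0 \<le> e"
  shows "x (k+2) i \<ge> lo + dl * e"
proof -
  let ?p = "2 - \<alpha>*T - T\<^sup>2/2 * S (k+1) i"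
  have "dl * e \<le> dl * (x (k+1) i - lo)" using dl_pos xi by (intro mult_left_mono) auto
  also have "\<dots> \<le> ?p * (x (k+1) i - lo)"
    by (rule mult_right_mono) (use dl_le_p[OF i f1] xi e in auto)
  also have "\<dots> \<le> x (k+2) i - lo" by (rule lower_terms(1)[OF i I])
  finally show ?thesis by simp
qed

lemma push_hi: assumes i: "i \<in> NN" and I: "Inv k lo hi" and j: "j \<in> K (k+1) i"
    and xj: "x (k+1) j \<le> hi - e" and e: "0 \<le> e"
  shows "x (k+2) i \<le> hi - dl * e"
proof -
  have jn: "j \<in> nbrs E i" using j K_sub by blast
  have "x (k+2) i - hi \<le> T\<^sup>2/2 * a i j * (x (k+1) j - hi)" by (rule upper_terms(2)[OF i I j])
  also have "\<dots> \<le> dl * (x (k+1) j - hi)"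
    by (rule mult_right_mono_neg) (use dl_le_a[OF jn] xj e in auto)
  also have "\<dots> \<le> dl * (- e)" using dl_pos xj by (intro mult_left_mono) auto
  finally show ?thesis by simp
qed

lemma push_lo: assumes i: "i \<in> NN" and I: "Inv k lo hi" and j: "j \<in> K (k+1) i"
    and xj: "x (k+1) j \<ge> lo + e" and e: "0 \<le> e"
  shows "x (k+2) i \<ge> lo + dl * e"
proof -
  have jn: "j \<in> nbrs E i" using j K_sub by blast
  have "dl * e \<le> dl * (x (k+1) j - lo)" using dl_pos xj by (intro mult_left_mono) auto
  also have "\<dots> \<le> T\<^sup>2/2 * a i j * (x (k+1) j - lo)"
    by (rule mult_right_mono) (use dl_le_a[OF jn] xj e in auto)
  also have "\<dots> \<le> x (k+2) i - lo" by (rule lower_terms(2)[OF i I j])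
  finally show ?thesis by simp
qed

lemma reach_hi: assumes i: "i \<in> NN" and I: "Inv k lo hi" and e: "0 \<le> e"
    and R: "i \<in> reach_set E (f+1) {l \<in> {1..n}. hi - e < x (k+1) l}"
  shows "x (k+2) i \<le> hi - dl * e"
proof -
  let ?S = "{l \<in> {1..n}. hi - e < x (k+1) l}"
  have iS: "hi - e < x (k+1) i" and c: "f + 1 \<le> card (nbrs E i - ?S)"
    using R unfolding reach_set_def by blast+
  have W: "nbrs E i - ?S \<subseteq> nbrs E i" by blast
  have lt: "\<forall>j \<in> nbrs E i - ?S. x (k+1) j < x (k+1) i"
  proof
    fix j assume "j \<in> nbrs E i - ?S"
    then have "j \<in> {1..n}" "j \<notin> ?S" using nbrs_sub by blast+
    then have "x (k+1) j \<le> hi - e" by simp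
    then show "x (k+1) j < x (k+1) i" using iS by linarith
  qed
  obtain j where j: "j \<in> nbrs E i - ?S" "j \<in> K (k+1) i"
    using kept_exists[OF i W c lt] by blast
  have "j \<in> {1..n}" "j \<notin> ?S" using j(1) nbrs_sub by blast+
  then have "x (k+1) j \<le> hi - e" by simp
  then show ?thesis by (rule push_hi[OF i I j(2) _ e])
qed

lemma reach_lo: assumes i: "i \<in> NN" and I: "Inv k lo hi" and e: "0 \<le> e"
    and R: "i \<in> reach_set E (f+1) {l \<in> {1..n}. x (k+1) l < lo + e}"
  shows "x (k+2) i \<ge> lo + dl * e"
proof -
  let ?S = "{l \<in> {1..n}. x (k+1) l < lo + e}"
  have iS: "x (k+1) i < lo + e" and c: "f + 1 \<le> card (nbrs E i - ?S)"
    using R unfolding reach_set_def by blast+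
  have W: "nbrs E i - ?S \<subseteq> nbrs E i" by blast
  have lt: "\<forall>j \<in> nbrs E i - ?S. x (k+1) i < x (k+1) j"
  proof
    fix j assume "j \<in> nbrs E i - ?S"
    then have "j \<in> {1..n}" "j \<notin> ?S" using nbrs_sub by blast+
    then have "x (k+1) j \<ge> lo + e" by simp
    then show "x (k+1) i < x (k+1) j" using iS by linarith
  qed
  obtain j where j: "j \<in> nbrs E i - ?S" "j \<in> K (k+1) i"
    using kept_exists2[OF i W c lt] by blast
  have "j \<in> {1..n}" "j \<notin> ?S" using j(1) nbrs_sub by blast+
  then have "x (k+1) j \<ge> lo + e" by simp
  then show ?thesis by (rule push_lo[OF i I j(2) _ e])
qed



lemma robust_step: assumes I: "Inv k lo hi" and e: "0 \<le> e" and sep: "lo + e \<le> hi - e"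
    and XM: "{i \<in> NN. hi - e < x (k+1) i} \<noteq> {}" and Xm: "{i \<in> NN. x (k+1) i < lo + e} \<noteq> {}"
  shows "(\<exists>i \<in> NN. hi - e < x (k+1) i \<and> x (k+2) i \<le> hi - dl * e) \<or>
         (\<exists>i \<in> NN. x (k+1) i < lo + e \<and> x (k+2) i \<ge> lo + dl * e)"
proof -
  define S1 where "S1 = {l \<in> {1..n}. hi - e < x (k+1) l}"
  define S2 where "S2 = {l \<in> {1..n}. x (k+1) l < lo + e}"
  have S1s: "S1 \<subseteq> {1..n}" and S2s: "S2 \<subseteq> {1..n}" unfolding S1_def S2_def by blast+
  have S1n: "S1 \<noteq> {}" using XM NN_sub unfolding S1_def by blast
  have S2n: "S2 \<noteq> {}" using Xm NN_sub unfolding S2_def by blast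
  have dj: "S1 \<inter> S2 = {}" unfolding S1_def S2_def using sep by force
  have R1: "reach_set E (f+1) S1 \<subseteq> S1" and R2: "reach_set E (f+1) S2 \<subseteq> S2"
    unfolding reach_set_def by blast+
  have H1: "x (k+2) i \<le> hi - dl * e" if "i \<in> NN" "i \<in> reach_set E (f+1) S1" for i
    using reach_hi[OF that(1) I e] that(2) unfolding S1_def .
  have H2: "x (k+2) i \<ge> lo + dl * e" if "i \<in> NN" "i \<in> reach_set E (f+1) S2" for i
    using reach_lo[OF that(1) I e] that(2) unfolding S2_def .
  from rb S1s S2s S1n S2n dj have
    "reach_set E (f+1) S1 = S1 \<or> reach_set E (f+1) S2 = S2 \<or>
     f + 1 \<le> card (reach_set E (f+1) S1) + card (reach_set E (f+1) S2)"
    unfolding robust_def by blast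
  then show ?thesis
  proof (elim disjE)
    assume r: "reach_set E (f+1) S1 = S1"
    from XM obtain i where i: "i \<in> NN" "hi - e < x (k+1) i" by blast
    then have "i \<in> S1" using NN_sub unfolding S1_def by blast
    then show ?thesis using H1[OF i(1)] r i by blast
  next
    assume r: "reach_set E (f+1) S2 = S2"
    from Xm obtain i where i: "i \<in> NN" "x (k+1) i < lo + e" by blast
    then have "i \<in> S2" using NN_sub unfolding S2_def by blast
    then show ?thesis using H2[OF i(1)] r i by blast
  next
    assume c: "f + 1 \<le> card (reach_set E (f+1) S1) + card (reach_set E (f+1) S2)"
    let ?R = "reach_set E (f+1) S1 \<union> reach_set E (f+1) S2"
    have f1: "finite (reach_set E (f+1) S1)" using R1 S1s by (meson finite_atLeastAtMost finite_subset)
    have f2: "finite (reach_set E (f+1) S2)" using R2 S2s by (meson finite_atLeastAtMost finite_subset)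
    have "reach_set E (f+1) S1 \<inter> reach_set E (f+1) S2 = {}" using R1 R2 dj by blast
    then have cR: "card ?R = card (reach_set E (f+1) S1) + card (reach_set E (f+1) S2)"
      using f1 f2 by (simp add: card_Un_disjoint)
    have "\<not> ?R \<subseteq> M"
    proof
      assume "?R \<subseteq> M"
      then have "card ?R \<le> card M" using finM by (rule card_mono[rotated])
      then show False using cR c cM by linarith
    qed
    then obtain i where i: "i \<in> ?R" "i \<notin> M" by blast
    have "i \<in> {1..n}" using i(1) R1 R2 S1s S2s by blast
    then have iN: "i \<in> NN" using i(2) unfolding NN_def by blast
    show ?thesis
    proof (cases "i \<in> reach_set E (f+1) S1")
      case True
      then have "i \<in> S1" using R1 by blast
      then have "hi - e < x (k+1) i" unfolding S1_def by blast
      then show ?thesis using H1[OF iN True] iN by blast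
    next
      case False
      then have "i \<in> reach_set E (f+1) S2" using i(1) by blast
      moreover then have "i \<in> S2" using R2 by blast
      then have "x (k+1) i < lo + e" unfolding S2_def by blast
      ultimately show ?thesis using H2[OF iN] iN by blast
    qed
  qed
qed



lemma contract_f1: assumes f1: "1 \<le> f"
  shows "hiP (t + Suc n) - loP (t + Suc n) \<le> (1 - dl ^ Suc n / 2) * (hiP t - loP t)"
proof -
  define hi where "hi = hiP t"
  define lo where "lo = loP t"
  define D where "D = hi - lo"
  have D0: "0 \<le> D" unfolding D_def hi_def lo_def using P_le by simp
  define e where "e s = D / 2 * dl ^ s" for s
  have I: "Inv (t + s) lo hi" for s unfolding hi_def lo_def using Inv_mono[OF Inv_P] .
  have e0: "0 \<le> e s" for s unfolding e_def using D0 dl_pos by simp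
  have eS: "e (Suc s) = dl * e s" for s unfolding e_def by simp
  have dlp: "dl ^ s \<le> 1" for s using dl_pos dl_le by (intro power_le_one) auto
  have eD: "e s \<le> D / 2" for s unfolding e_def using dlp[of s] D0
    by (simp add: mult_left_le)
  have sep: "lo + e s \<le> hi - e s" for s
  proof -
    have "2 * e s \<le> D" using eD[of s] by simp
    then show ?thesis unfolding D_def by simp
  qed
  define XM where "XM s = {i \<in> NN. hi - e s < x (t + s + 1) i}" for s
  define Xm where "Xm s = {i \<in> NN. x (t + s + 1) i < lo + e s}" for s
  have fXM: "finite (XM s)" for s unfolding XM_def using fin_NN by simp
  have fXm: "finite (Xm s)" for s unfolding Xm_def using fin_NN by simp
  have idx: "t + Suc s + 1 = (t + s) + 2" for s by simp
  have subM: "XM (Suc s) \<subseteq> XM s" for s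
  proof
    fix i assume i: "i \<in> XM (Suc s)"
    then have iN: "i \<in> NN" unfolding XM_def by blast
    show "i \<in> XM s"
    proof (rule ccontr)
      assume "i \<notin> XM s"
      then have "x (t + s + 1) i \<le> hi - e s" using iN unfolding XM_def by auto
      from out_stays_hi[OF f1 iN I this e0] have "x (t + s + 2) i \<le> hi - e (Suc s)"
        unfolding eS .
      then show False using i unfolding XM_def idx by simp
    qed
  qed
  have subm: "Xm (Suc s) \<subseteq> Xm s" for s
  proof
    fix i assume i: "i \<in> Xm (Suc s)"
    then have iN: "i \<in> NN" unfolding Xm_def by blast
    show "i \<in> Xm s"
    proof (rule ccontr)
      assume "i \<notin> Xm s"
      then have "x (t + s + 1) i \<ge> lo + e s" using iN unfolding Xm_def by auto
      from out_stays_lo[OF f1 iN I this e0] have "x (t + s + 2) i \<ge> lo + e (Suc s)"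
        unfolding eS .
      then show False using i unfolding Xm_def idx by simp
    qed
  qed
  have strict: "XM (Suc s) \<subset> XM s \<or> Xm (Suc s) \<subset> Xm s" if ne: "XM s \<noteq> {}" "Xm s \<noteq> {}" for s
  proof -
    have "(\<exists>i \<in> NN. hi - e s < x (t + s + 1) i \<and> x (t + s + 2) i \<le> hi - dl * e s) \<or>
         (\<exists>i \<in> NN. x (t + s + 1) i < lo + e s \<and> x (t + s + 2) i \<ge> lo + dl * e s)"
      by (rule robust_step[OF I e0 sep]) (use ne in \<open>simp_all add: XM_def Xm_def\<close>)
    then show ?thesis
    proof
      assume "\<exists>i \<in> NN. hi - e s < x (t + s + 1) i \<and> x (t + s + 2) i \<le> hi - dl * e s"
      then obtain i where "i \<in> XM s" "i \<notin> XM (Suc s)" unfolding XM_def idx eS by auto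
      then show ?thesis using subM[of s] by blast
    next
      assume "\<exists>i \<in> NN. x (t + s + 1) i < lo + e s \<and> x (t + s + 2) i \<ge> lo + dl * e s"
      then obtain i where "i \<in> Xm s" "i \<notin> Xm (Suc s)" unfolding Xm_def idx eS by auto
      then show ?thesis using subm[of s] by blast
    qed
  qed
  define cnt where "cnt s = card (XM s) + card (Xm s)" for s
  have cdec: "cnt (Suc s) < cnt s" if "XM s \<noteq> {}" "Xm s \<noteq> {}" for s
  proof -
    have c1: "card (XM (Suc s)) \<le> card (XM s)" using subM fXM by (intro card_mono) auto
    have c2: "card (Xm (Suc s)) \<le> card (Xm s)" using subm fXm by (intro card_mono) auto
    from strict[OF that] show ?thesis
    proof
      assume "XM (Suc s) \<subset> XM s"
      then have "card (XM (Suc s)) < card (XM s)" using fXM by (intro psubset_card_mono) auto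
      then show ?thesis unfolding cnt_def using c2 by linarith
    next
      assume "Xm (Suc s) \<subset> Xm s"
      then have "card (Xm (Suc s)) < card (Xm s)" using fXm by (intro psubset_card_mono) auto
      then show ?thesis unfolding cnt_def using c1 by linarith
    qed
  qed
  have c0: "cnt 0 \<le> n"
  proof -
    have "XM 0 \<inter> Xm 0 = {}" unfolding XM_def Xm_def using sep[of 0] by force
    then have "cnt 0 = card (XM 0 \<union> Xm 0)" unfolding cnt_def using fXM fXm
      by (simp add: card_Un_disjoint)
    also have "\<dots> \<le> card {1..n}"
      by (rule card_mono) (use NN_sub in \<open>auto simp: XM_def Xm_def\<close>)
    finally show ?thesis by simp
  qed
  have ex: "\<exists>s \<le> n. XM s = {} \<or> Xm s = {}"
  proof (rule ccontr)
    assume "\<not> ?thesis"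
    then have ne: "XM s \<noteq> {} \<and> Xm s \<noteq> {}" if "s \<le> n" for s using that by blast
    have "s \<le> Suc n \<longrightarrow> cnt s + s \<le> cnt 0" for s
    proof (induction s)
      case (Suc s)
      show ?case
      proof
        assume "Suc s \<le> Suc n"
        then have "s \<le> n" by simp
        then show "cnt (Suc s) + Suc s \<le> cnt 0" using Suc cdec ne by fastforce
      qed
    qed simp
    then have "cnt (Suc n) + Suc n \<le> cnt 0" by blast
    then show False using c0 by simp
  qed
  have persM: "XM s = {} \<Longrightarrow> XM (s + d) = {}" for s d
    by (induction d) (use subM in auto)
  have persm: "Xm s = {} \<Longrightarrow> Xm (s + d) = {}" for s d
    by (induction d) (use subm in auto)
  have eSn: "e (Suc n) \<le> e n" using eS[of n] dl_le e0[of n] by (simp add: mult_left_le_one_le dl_pos less_imp_le)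
  from ex obtain s0 where s0: "s0 \<le> n" "XM s0 = {} \<or> Xm s0 = {}" by blast
  have Vb: "hiP (t + Suc n) - loP (t + Suc n) \<le> D - e (Suc n)"
  proof (cases "XM s0 = {}")
    case True
    have a1: "XM n = {}" using persM[OF True, of "n - s0"] s0(1) by simp
    have a2: "XM (Suc n) = {}" using persM[OF True, of "Suc n - s0"] s0(1) by simp
    have "Inv (t + Suc n) lo (hi - e (Suc n))" unfolding Inv_def
    proof
      fix i assume iN: "i \<in> NN"
      have "x (t + n + 1) i \<le> hi - e n" using a1 iN unfolding XM_def by auto
      moreover have "x (t + Suc n + 1) i \<le> hi - e (Suc n)" using a2 iN unfolding XM_def by auto
      moreover have "lo \<le> x (t + Suc n) i \<and> lo \<le> x (Suc (t + Suc n)) i" using I[of "Suc n"] iN unfolding Inv_def by blast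
      ultimately show "lo \<le> x (t + Suc n) i \<and> x (t + Suc n) i \<le> hi - e (Suc n) \<and>
          lo \<le> x (Suc (t + Suc n)) i \<and> x (Suc (t + Suc n)) i \<le> hi - e (Suc n)"
        using eSn by simp
    qed
    from P_of_Inv[OF this] show ?thesis unfolding D_def by linarith
  next
    case False
    then have F: "Xm s0 = {}" using s0(2) by blast
    have a1: "Xm n = {}" using persm[OF F, of "n - s0"] s0(1) by simp
    have a2: "Xm (Suc n) = {}" using persm[OF F, of "Suc n - s0"] s0(1) by simp
    have "Inv (t + Suc n) (lo + e (Suc n)) hi" unfolding Inv_def
    proof
      fix i assume iN: "i \<in> NN"
      have "x (t + n + 1) i \<ge> lo + e n" using a1 iN unfolding Xm_def by auto
      moreover have "x (t + Suc n + 1) i \<ge> lo + e (Suc n)" using a2 iN unfolding Xm_def by auto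
      moreover have "x (t + Suc n) i \<le> hi \<and> x (Suc (t + Suc n)) i \<le> hi" using I[of "Suc n"] iN unfolding Inv_def by blast
      ultimately show "lo + e (Suc n) \<le> x (t + Suc n) i \<and> x (t + Suc n) i \<le> hi \<and>
          lo + e (Suc n) \<le> x (Suc (t + Suc n)) i \<and> x (Suc (t + Suc n)) i \<le> hi"
        using eSn by simp
    qed
    from P_of_Inv[OF this] show ?thesis unfolding D_def by linarith
  qed
  also have "D - e (Suc n) = (1 - dl ^ Suc n / 2) * D" unfolding e_def by (simp add: algebra_simps)
  finally show ?thesis unfolding D_def hi_def lo_def .
qed



lemma M0: assumes "f = 0" shows "M = {}"
  using cM assms finM by simp

lemma NN0: assumes "f = 0" shows "NN = {1..n}"
  unfolding NN_def using M0[OF assms] by simp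

lemma K0: assumes f0: "f = 0" and i: "i \<in> NN" shows "K k i = nbrs E i"
proof -
  let ?r = "\<lambda>j. x k j - x k i"
  define U where "U = fst (ULp k i)"
  define L where "L = snd (ULp k i)"
  have up: "upper_removed f (nbrs E i) ?r U" using ULp_spec[OF i] U_def by blast
  have lo: "lower_removed f (nbrs E i) ?r L" using ULp_spec[OF i] L_def by blast
  have "U \<subseteq> nbrs E i \<and> card U = 0" using up f0 unfolding upper_removed_def by auto
  then have "U = {}" using fin_nbrs by (metis card_0_eq finite_subset)
  moreover have "L \<subseteq> nbrs E i \<and> card L = 0" using lo f0 unfolding lower_removed_def by auto
  then have "L = {}" using fin_nbrs by (metis card_0_eq finite_subset)
  ultimately show ?thesis unfolding K_def U_def L_def by simp
qed

definition "anch lo hi vv s i \<eta> \<longleftrightarrow> (1-\<eta>)*lo + \<eta>*vv \<le> x s i \<and> x s i \<le> (1-\<eta>)*hi + \<eta>*vv"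

lemma anch_mono: assumes "anch lo hi vv s i \<eta>" "0 \<le> \<eta>'" "\<eta>' \<le> \<eta>" "lo \<le> vv" "vv \<le> hi"
  shows "anch lo hi vv s i \<eta>'"
proof -
  have "(1-\<eta>)*hi + \<eta>*vv \<le> (1-\<eta>')*hi + \<eta>'*vv"
  proof -
    have "(\<eta> - \<eta>')*(vv - hi) \<le> 0" using assms by (simp add: mult_nonneg_nonpos)
    then show ?thesis by (simp add: algebra_simps)
  qed
  moreover have "(1-\<eta>')*lo + \<eta>'*vv \<le> (1-\<eta>)*lo + \<eta>*vv"
  proof -
    have "0 \<le> (\<eta> - \<eta>')*(vv - lo)" using assms by simp
    then show ?thesis by (simp add: algebra_simps)
  qed
  ultimately show ?thesis using assms(1) unfolding anch_def by linarith
qed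

lemma hop1: assumes f0: "f = 0" and I: "Inv s lo hi" and v: "lo \<le> vv" "vv \<le> hi" and e: "0 \<le> \<eta>"
    and j: "(j, i) \<in> E" and A: "anch lo hi vv (s+1) j \<eta>"
  shows "anch lo hi vv (s+2) i (dl*\<eta>)"
proof -
  have jn: "j \<in> nbrs E i" using j unfolding nbrs_def by simp
  have i: "i \<in> NN" using j dg NN0[OF f0] unfolding digraph_def by auto
  have jK: "j \<in> K (s+1) i" using K0[OF f0 i] jn by simp
  have w: "dl \<le> T\<^sup>2/2 * a i j" by (rule dl_le_a[OF jn])
  show ?thesis unfolding anch_def
  proof
    show "(1 - dl*\<eta>)*lo + (dl*\<eta>)*vv \<le> x (s+2) i"
      by (rule anch_lo_real[of \<eta> lo vv "x (s+1) j" "T\<^sup>2/2 * a i j"])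
        (use A lower_terms(2)[OF i _ jK] I w dl_pos e v in \<open>auto simp: anch_def Inv_def\<close>)
    show "x (s+2) i \<le> (1 - dl*\<eta>)*hi + (dl*\<eta>)*vv"
      by (rule anch_up_real[of "x (s+1) j" \<eta> hi vv _ "T\<^sup>2/2 * a i j"])
        (use A upper_terms(2)[OF i I jK] w dl_pos e v in \<open>auto simp: anch_def\<close>)
  qed
qed



lemma hop2: assumes f0: "f = 0" and I: "Inv s lo hi" and v: "lo \<le> vv" "vv \<le> hi" and e: "0 \<le> \<eta>"
    and j: "(j, i) \<in> E" and A: "anch lo hi vv s j \<eta>"
  shows "anch lo hi vv (s+2) i (dl*\<eta>)"
proof -
  have jn: "j \<in> nbrs E i" using j unfolding nbrs_def by simp
  have i: "i \<in> NN" using j dg NN0[OF f0] unfolding digraph_def by auto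
  have jK: "j \<in> K s i" using K0[OF f0 i] jn by simp
  have w: "dl \<le> T\<^sup>2/2 * a i j" by (rule dl_le_a[OF jn])
  show ?thesis unfolding anch_def
  proof
    show "(1 - dl*\<eta>)*lo + (dl*\<eta>)*vv \<le> x (s+2) i"
      by (rule anch_lo_real[of \<eta> lo vv "x s j" "T\<^sup>2/2 * a i j"])
        (use A lower_terms(3)[OF i _ jK] I w dl_pos e v in \<open>auto simp: anch_def Inv_def\<close>)
    show "x (s+2) i \<le> (1 - dl*\<eta>)*hi + (dl*\<eta>)*vv"
      by (rule anch_up_real[of "x s j" \<eta> hi vv _ "T\<^sup>2/2 * a i j"])
        (use A upper_terms(3)[OF i I jK] w dl_pos e v in \<open>auto simp: anch_def\<close>)
  qed
qed

lemma hop_self: assumes f0: "f = 0" and I: "Inv s lo hi" and v: "lo \<le> vv" "vv \<le> hi" and e: "0 \<le> \<eta>"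
    and i: "i \<in> NN" and ne: "nbrs E i = {}" and A: "anch lo hi vv (s+1) i \<eta>"
  shows "anch lo hi vv (s+2) i (dl*\<eta>)"
proof -
  have S0: "S (s+1) i = 0" unfolding S_def K0[OF f0 i] ne by simp
  have "T\<^sup>2/2 * min \<gamma> 1 \<le> T\<^sup>2/2 * 1" using T2p by (intro mult_left_mono) auto
  then have w: "dl \<le> 2 - \<alpha>*T - T\<^sup>2/2 * S (s+1) i" unfolding S0 dl_def using al2 by simp
  show ?thesis unfolding anch_def
  proof
    show "(1 - dl*\<eta>)*lo + (dl*\<eta>)*vv \<le> x (s+2) i"
      by (rule anch_lo_real[of \<eta> lo vv "x (s+1) i" "2 - \<alpha>*T - T\<^sup>2/2 * S (s+1) i"])
        (use A lower_terms(1)[OF i, of s] I w dl_pos e v in \<open>auto simp: anch_def Inv_def\<close>)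
    show "x (s+2) i \<le> (1 - dl*\<eta>)*hi + (dl*\<eta>)*vv"
      by (rule anch_up_real[of "x (s+1) i" \<eta> hi vv _ "2 - \<alpha>*T - T\<^sup>2/2 * S (s+1) i"])
        (use A upper_terms(1)[OF i I] w dl_pos e v in \<open>auto simp: anch_def\<close>)
  qed
qed

lemma walk: assumes f0: "f = 0" and I: "Inv t lo hi" and v: "lo \<le> vv" "vv \<le> hi"
    and b: "t + 1 \<le> b" and A: "anch lo hi vv b w0 (dl ^ m0)"
  shows "(w0, z) \<in> E ^^ k \<Longrightarrow> k \<le> s \<Longrightarrow> s \<le> 2 * k \<Longrightarrow> anch lo hi vv (b + s) z (dl ^ (m0 + s))"
proof (induction k arbitrary: s z)
  case 0 then show ?case using A by simp
next
  case (Suc k)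
  from Suc.prems(1) obtain y where y: "(w0, y) \<in> E ^^ k" "(y, z) \<in> E" by (rule relpow_Suc_E)
  have Iany: "Inv \<sigma> lo hi" if "t \<le> \<sigma>" for \<sigma> using Inv_mono[OF I, of "\<sigma> - t"] that by simp
  have dl0: "0 \<le> dl ^ m" for m using dl_pos by simp
  show ?case
  proof (cases "s \<le> 2 * k + 1")
    case True
    obtain s' where s': "s = Suc s'" using Suc.prems(2) by (cases s) auto
    have "anch lo hi vv (b + s') y (dl ^ (m0 + s'))" using Suc.IH[OF y(1)] Suc.prems True s' by simp
    moreover have "b + s' = (b + s' - 1) + 1" using b by simp
    ultimately have A1: "anch lo hi vv ((b + s' - 1) + 1) y (dl ^ (m0 + s'))" by simp
    have "anch lo hi vv ((b + s' - 1) + 2) z (dl * dl ^ (m0 + s'))"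
      by (rule hop1[OF f0 Iany v dl0 y(2) A1]) (use b in simp)
    moreover have "(b + s' - 1) + 2 = b + s" using b s' by simp
    moreover have "dl * dl ^ (m0 + s') = dl ^ (m0 + s)" using s' by simp
    ultimately show ?thesis by simp
  next
    case False
    then have s2: "s = 2 * k + 2" using Suc.prems(3) by simp
    have A2: "anch lo hi vv (b + 2 * k) y (dl ^ (m0 + 2 * k))" using Suc.IH[OF y(1)] by simp
    have "anch lo hi vv ((b + 2 * k) + 2) z (dl * dl ^ (m0 + 2 * k))"
      by (rule hop2[OF f0 Iany v dl0 y(2) A2]) (use b in simp)
    then have "anch lo hi vv (b + s) z (dl ^ Suc (m0 + 2 * k))" using s2 by (simp add: add.assoc)
    then show ?thesis
      by (rule anch_mono) (use s2 dl_pos dl_le v in \<open>auto intro: power_decreasing\<close>)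
  qed
qed



definition "Anc z = {l \<in> {1..n}. (l, z) \<in> E\<^sup>*}"

lemma Anc_closed: assumes "y \<in> Anc z" "(l, y) \<in> E" shows "l \<in> Anc z"
proof -
  have "l \<in> {1..n}" using assms(2) dg unfolding digraph_def by auto
  moreover have "(l, z) \<in> E\<^sup>*" using assms unfolding Anc_def by auto
  ultimately show ?thesis unfolding Anc_def by blast
qed

lemma Anc_reach: "reach_set E 1 (Anc z) = {}"
proof (rule ccontr)
  assume "reach_set E 1 (Anc z) \<noteq> {}"
  then obtain y where y: "y \<in> Anc z" "1 \<le> card (nbrs E y - Anc z)" unfolding reach_set_def by blast
  then have "nbrs E y - Anc z \<noteq> {}" by (metis card.empty not_one_le_zero)
  then obtain l where "l \<in> nbrs E y" "l \<notin> Anc z" by blast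
  then show False using Anc_closed[OF y(1)] unfolding nbrs_def by blast
qed

lemma root: assumes f0: "f = 0" shows "\<exists>u0 \<in> {1..n}. \<forall>i \<in> {1..n}. (u0, i) \<in> E\<^sup>*"
proof -
  have rb1: "robust n E 1 1" using rb f0 by simp
  have "1 \<in> {1..n}" using n2 by simp
  from ex_has_least_nat[of "\<lambda>z. z \<in> {1..n}", OF this, of "\<lambda>z. card (Anc z)"]
  obtain u0 where u0: "u0 \<in> {1..n}" "\<forall>z. z \<in> {1..n} \<longrightarrow> card (Anc u0) \<le> card (Anc z)" by blast
  have finA: "finite (Anc z)" for z unfolding Anc_def by simp
  have subA: "Anc z \<subseteq> {1..n}" for z unfolding Anc_def by blast
  have inA: "z \<in> {1..n} \<Longrightarrow> z \<in> Anc z" for z unfolding Anc_def by simp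
  have "\<forall>i \<in> {1..n}. (u0, i) \<in> E\<^sup>*"
  proof
    fix i assume i: "i \<in> {1..n}"
    have "Anc u0 \<inter> Anc i \<noteq> {}"
    proof
      assume dj: "Anc u0 \<inter> Anc i = {}"
      have "Anc u0 \<noteq> {}" "Anc i \<noteq> {}" using inA u0(1) i by blast+
      with rb1 subA dj have
        "reach_set E 1 (Anc u0) = Anc u0 \<or> reach_set E 1 (Anc i) = Anc i \<or>
         1 \<le> card (reach_set E 1 (Anc u0)) + card (reach_set E 1 (Anc i))"
        unfolding robust_def by blast
      then show False unfolding Anc_reach using \<open>Anc u0 \<noteq> {}\<close> \<open>Anc i \<noteq> {}\<close> by simp
    qed
    then obtain z where z: "z \<in> Anc u0" "z \<in> Anc i" by blast
    have zn: "z \<in> {1..n}" using z unfolding Anc_def by blast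
    have sub: "Anc z \<subseteq> Anc u0"
    proof
      fix l assume "l \<in> Anc z"
      then show "l \<in> Anc u0" using z(1) unfolding Anc_def by auto
    qed
    have "card (Anc u0) \<le> card (Anc z)" using u0(2) zn by blast
    moreover have "card (Anc z) \<le> card (Anc u0)" using sub finA by (rule card_mono[rotated])
    ultimately have "card (Anc z) = card (Anc u0)" by simp
    then have "Anc z = Anc u0" using card_subset_eq[OF finA sub] by simp
    then have "u0 \<in> Anc z" using inA u0(1) by blast
    then have "(u0, z) \<in> E\<^sup>*" unfolding Anc_def by blast
    moreover have "(z, i) \<in> E\<^sup>*" using z(2) unfolding Anc_def by blast
    ultimately show "(u0, i) \<in> E\<^sup>*" by (rule rtrancl_trans)
  qed
  then show ?thesis using u0(1) by blast
qed



lemma finE: "finite E"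
  using dg unfolding digraph_def by (meson finite_SigmaI finite_atLeastAtMost finite_subset)

lemma relpow_bnd: assumes "(p, q) \<in> E\<^sup>*" shows "\<exists>d \<le> card E. (p, q) \<in> E ^^ d"
  using assms rtrancl_finite_eq_relpow[OF finE] by auto

lemma contract_f0: assumes f0: "f = 0"
  shows "hiP (t + (2 * card E + 2)) - loP (t + (2 * card E + 2)) \<le> (1 - dl ^ (2 * card E + 2)) * (hiP t - loP t)"
proof -
  define N0 where "N0 = 2 * card E + 2"
  define hi where "hi = hiP t"
  define lo where "lo = loP t"
  have I: "Inv t lo hi" unfolding hi_def lo_def by (rule Inv_P)
  have Iany: "Inv \<sigma> lo hi" if "t \<le> \<sigma>" for \<sigma> using Inv_mono[OF I, of "\<sigma> - t"] that by simp
  obtain u0 where u0: "u0 \<in> {1..n}" "\<forall>i \<in> {1..n}. (u0, i) \<in> E\<^sup>*" using root[OF f0] by blast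
  have u0N: "u0 \<in> NN" using u0(1) NN0[OF f0] by simp
  define vv where "vv = x (t+1) u0"
  have v: "lo \<le> vv" "vv \<le> hi" using I u0N unfolding Inv_def vv_def by auto
  have dl0: "0 \<le> dl ^ m" for m using dl_pos by simp
  have A0: "anch lo hi vv (t+1) u0 (dl ^ 0)" unfolding anch_def vv_def by simp
  have pers: "\<exists>L \<le> card E + 1. \<forall>s \<ge> L. anch lo hi vv (t + 1 + s) u0 (dl ^ s)"
  proof (cases "nbrs E u0 = {}")
    case True
    have "anch lo hi vv (t + 1 + s) u0 (dl ^ s)" for s
    proof (induction s)
      case 0 then show ?case using A0 by simp
    next
      case (Suc s)
      have "anch lo hi vv ((t + s) + 1) u0 (dl ^ s)" using Suc by (simp add: add.commute add.left_commute)
      from hop_self[OF f0 Iany[of "t + s"] v dl0 u0N True this] show ?case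
        by (simp add: add.commute add.left_commute)
    qed
    then show ?thesis by blast
  next
    case False
    then obtain j where "j \<in> nbrs E u0" by blast
    then have ju: "(j, u0) \<in> E" unfolding nbrs_def by simp
    then have "j \<in> {1..n}" using dg unfolding digraph_def by auto
    then obtain m where m: "m \<le> card E" "(u0, j) \<in> E ^^ m" using relpow_bnd u0(2) by blast
    have cyc: "(u0, u0) \<in> E ^^ Suc m" using m(2) ju by (rule relpow_Suc_I)
    have "\<forall>s. Suc m \<le> s \<longrightarrow> anch lo hi vv (t + 1 + s) u0 (dl ^ s)"
    proof (intro allI)
      fix s show "Suc m \<le> s \<longrightarrow> anch lo hi vv (t + 1 + s) u0 (dl ^ s)"
      proof (induction s rule: less_induct)
        case (less s)
        show ?case
        proof
          assume sL: "Suc m \<le> s"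
          show "anch lo hi vv (t + 1 + s) u0 (dl ^ s)"
          proof (cases "s \<le> 2 * Suc m")
            case True
            from walk[OF f0 I v _ A0 cyc sL True] show ?thesis by simp
          next
            case False
            then have "Suc m \<le> s - Suc m" "s - Suc m < s" by auto
            then have Ah: "anch lo hi vv (t + 1 + (s - Suc m)) u0 (dl ^ (s - Suc m))" using less by blast
            have "anch lo hi vv (t + 1 + (s - Suc m) + Suc m) u0 (dl ^ ((s - Suc m) + Suc m))"
              by (rule walk[OF f0 I v _ Ah cyc]) simp_all
            moreover have "t + 1 + (s - Suc m) + Suc m = t + 1 + s" "(s - Suc m) + Suc m = s" using False by simp_all
            ultimately show ?thesis by metis
          qed
        qed
      qed
    qed
    then show ?thesis using m(1) by (intro exI[of _ "Suc m"]) auto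
  qed
  then obtain L where L: "L \<le> card E + 1" "\<And>s. L \<le> s \<Longrightarrow> anch lo hi vv (t + 1 + s) u0 (dl ^ s)" by blast
  have all: "anch lo hi vv (t + 1 + s) i (dl ^ s)" if i: "i \<in> {1..n}" and s: "card E + 1 + card E \<le> s" for i s
  proof -
    obtain d where d: "d \<le> card E" "(u0, i) \<in> E ^^ d" using relpow_bnd u0(2) i by blast
    have "L \<le> s - d" using L(1) d(1) s by simp
    then have Ah: "anch lo hi vv (t + 1 + (s - d)) u0 (dl ^ (s - d))" by (rule L(2))
    have "anch lo hi vv (t + 1 + (s - d) + d) i (dl ^ ((s - d) + d))"
      by (rule walk[OF f0 I v _ Ah d(2)]) simp_all
    then show ?thesis using d(1) s by simp
  qed
  have "Inv (t + N0) ((1 - dl ^ N0) * lo + dl ^ N0 * vv) ((1 - dl ^ N0) * hi + dl ^ N0 * vv)"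
    unfolding Inv_def
  proof
    fix i assume "i \<in> NN"
    then have i: "i \<in> {1..n}" using NN_sub by blast
    have a1: "anch lo hi vv (t + N0) i (dl ^ N0)"
    proof -
      have "anch lo hi vv (t + 1 + (N0 - 1)) i (dl ^ (N0 - 1))" by (rule all[OF i]) (simp add: N0_def)
      then have "anch lo hi vv (t + N0) i (dl ^ (N0 - 1))" by (simp add: N0_def)
      then show ?thesis
        by (rule anch_mono) (use dl_pos dl_le v in \<open>auto intro: power_decreasing simp: N0_def\<close>)
    qed
    have a2: "anch lo hi vv (Suc (t + N0)) i (dl ^ N0)"
      using all[OF i, of N0] by (simp add: N0_def)
    show "(1 - dl ^ N0) * lo + dl ^ N0 * vv \<le> x (t + N0) i \<and> x (t + N0) i \<le> (1 - dl ^ N0) * hi + dl ^ N0 * vv \<and>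
        (1 - dl ^ N0) * lo + dl ^ N0 * vv \<le> x (Suc (t + N0)) i \<and> x (Suc (t + N0)) i \<le> (1 - dl ^ N0) * hi + dl ^ N0 * vv"
      using a1 a2 unfolding anch_def by blast
  qed
  from P_of_Inv[OF this] have "hiP (t + N0) - loP (t + N0) \<le> (1 - dl ^ N0) * hi + dl ^ N0 * vv - ((1 - dl ^ N0) * lo + dl ^ N0 * vv)"
    by linarith
  also have "\<dots> = (1 - dl ^ N0) * (hi - lo)" by (simp add: algebra_simps)
  finally show ?thesis unfolding N0_def hi_def lo_def .
qed



lemma eta_eq: "eta T \<gamma> n E = dl ^ NN0 n E / 2" unfolding eta_def dl_def ..

lemma eta_bnd: "0 < eta T \<gamma> n E" "eta T \<gamma> n E \<le> 1/2"
proof -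
  show "0 < eta T \<gamma> n E" unfolding eta_eq using dl_pos by simp
  have "dl ^ NN0 n E \<le> 1" using dl_pos dl_le by (intro power_le_one) auto
  then show "eta T \<gamma> n E \<le> 1/2" unfolding eta_eq by simp
qed

lemma contract: "hiP (t + NN0 n E) - loP (t + NN0 n E) \<le> (1 - eta T \<gamma> n E) * (hiP t - loP t)"
proof -
  have D0: "0 \<le> hiP t - loP t" using P_le by simp
  have dpow: "dl ^ NN0 n E \<le> dl ^ m" if "m \<le> NN0 n E" for m
    by (rule power_decreasing) (use that dl_pos dl_le in auto)
  show ?thesis
  proof (cases "f = 0")
    case True
    let ?m = "2 * card E + 2"
    have e: "t + NN0 n E = (t + ?m) + (NN0 n E - ?m)" by (simp add: NN0_def)
    have "hiP (t + NN0 n E) - loP (t + NN0 n E) \<le> hiP (t + ?m) - loP (t + ?m)"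
      using P_mono[of "t + ?m" "NN0 n E - ?m"] unfolding e[symmetric] by linarith
    also have "\<dots> \<le> (1 - dl ^ ?m) * (hiP t - loP t)" by (rule contract_f0[OF True])
    also have "\<dots> \<le> (1 - eta T \<gamma> n E) * (hiP t - loP t)"
    proof (rule mult_right_mono[OF _ D0])
      have "dl ^ NN0 n E \<le> dl ^ ?m" by (rule dpow) (simp add: NN0_def)
      moreover have "0 \<le> dl ^ NN0 n E" using dl_pos by simp
      ultimately show "1 - dl ^ ?m \<le> 1 - eta T \<gamma> n E" unfolding eta_eq by simp
    qed
    finally show ?thesis .
  next
    case False
    then have f1: "1 \<le> f" by simp
    have e: "t + NN0 n E = (t + Suc n) + (NN0 n E - Suc n)" by (simp add: NN0_def)
    have "hiP (t + NN0 n E) - loP (t + NN0 n E) \<le> hiP (t + Suc n) - loP (t + Suc n)"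
      using P_mono[of "t + Suc n" "NN0 n E - Suc n"] unfolding e[symmetric] by linarith
    also have "\<dots> \<le> (1 - dl ^ Suc n / 2) * (hiP t - loP t)" by (rule contract_f1[OF f1])
    also have "\<dots> \<le> (1 - eta T \<gamma> n E) * (hiP t - loP t)"
    proof (rule mult_right_mono[OF _ D0])
      have "dl ^ NN0 n E \<le> dl ^ Suc n" by (rule dpow) (simp add: NN0_def)
      then show "1 - dl ^ Suc n / 2 \<le> 1 - eta T \<gamma> n E" unfolding eta_eq by simp
    qed
    finally show ?thesis .
  qed
qed

lemma decay_iter: "hiP (j * NN0 n E + r) - loP (j * NN0 n E + r) \<le> (1 - eta T \<gamma> n E) ^ j * (hiP 0 - loP 0)"
proof (induction j)
  case 0
  then show ?case using P_mono[of 0 r] by simp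
next
  case (Suc j)
  have "hiP (Suc j * NN0 n E + r) - loP (Suc j * NN0 n E + r) \<le> (1 - eta T \<gamma> n E) * (hiP (j * NN0 n E + r) - loP (j * NN0 n E + r))"
    using contract[of "j * NN0 n E + r"] by (simp add: algebra_simps)
  also have "\<dots> \<le> (1 - eta T \<gamma> n E) * ((1 - eta T \<gamma> n E) ^ j * (hiP 0 - loP 0))"
    by (rule mult_left_mono[OF Suc]) (use eta_bnd in simp)
  finally show ?case by simp
qed

lemma decay: fixes k :: nat assumes k: "1 \<le> k"
  shows "Vfun NN x k \<le> (1 / (1 - eta T \<gamma> n E)) * root (NN0 n E) (1 - eta T \<gamma> n E) ^ k * Vfun NN x 1"
proof -
  let ?N = "NN0 n E" and ?q = "1 - eta T \<gamma> n E"
  define \<rho> where "\<rho> = root ?N ?q"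
  have N0: "0 < ?N" unfolding NN0_def by simp
  have q: "0 < ?q" "?q < 1" using eta_bnd by auto
  have rN: "\<rho> ^ ?N = ?q" unfolding \<rho>_def using q N0 by (simp add: real_root_pow_pos)
  have r0: "0 < \<rho>" unfolding \<rho>_def using q N0 by simp
  have r1: "\<rho> < 1" unfolding \<rho>_def using q N0 by simp
  obtain t where t: "k = Suc t" using k by (cases k) auto
  define j where "j = t div ?N"
  define r where "r = t mod ?N"
  have tj: "t = j * ?N + r" unfolding j_def r_def using div_mult_mod_eq[of t ?N] by simp
  have rl: "r < ?N" unfolding r_def using N0 by simp
  have V1: "Vfun NN x 1 = hiP 0 - loP 0" using V_eq[of 0] by simp
  have V0: "0 \<le> hiP 0 - loP 0" using P_le by simp
  have "Vfun NN x k = hiP t - loP t" using V_eq t by simp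
  also have "\<dots> \<le> ?q ^ j * (hiP 0 - loP 0)" using decay_iter[of j r] tj by simp
  also have "?q ^ j = \<rho> ^ (j * ?N)" unfolding rN[symmetric] power_mult[symmetric] by (simp add: mult.commute)
  also have "\<rho> ^ (j * ?N) = \<rho> ^ (j * ?N + ?N) / ?q" using rN q by (simp add: power_add)
  also have "\<rho> ^ (j * ?N + ?N) \<le> \<rho> ^ k"
    by (rule power_decreasing) (use t tj rl r0 r1 in auto)
  then have "\<rho> ^ (j * ?N + ?N) / ?q * (hiP 0 - loP 0) \<le> \<rho> ^ k / ?q * (hiP 0 - loP 0)"
    using q V0 by (intro mult_right_mono divide_right_mono) auto
  finally show ?thesis unfolding V1 \<rho>_def by (simp add: field_simps)
qed



definition "Bd = (\<Sum>i \<in> NN. \<bar>x 0 i\<bar> + T * \<bar>v 0 i\<bar>)"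

lemma beta_pos: "0 < 1 - \<alpha>*T/2" using al2 T2p by linarith
lemma beta_le: "1 - \<alpha>*T/2 \<le> 1" using al1 T2p by linarith

lemma x1_eq: assumes i: "i \<in> NN" shows "x 1 i = x 0 i + T*(1 - \<alpha>*T/2) * v 0 i + T\<^sup>2/2 * w 0 i"
  using dyn(1)[OF i, of 0] u_eq[OF i, of 0] by (simp add: algebra_simps power2_eq_square)

lemma Inv0: "Inv 0 (- Bd) Bd"
proof -
  define A where "A = (\<Sum>i \<in> NN. \<bar>x 0 i\<bar>)"
  define Vs where "Vs = (\<Sum>i \<in> NN. T * \<bar>v 0 i\<bar>)"
  have BA: "Bd = A + Vs" unfolding Bd_def A_def Vs_def by (simp add: sum.distrib)
  have xl: "\<bar>x 0 l\<bar> \<le> A" if "l \<in> NN" for l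
    unfolding A_def by (rule member_le_sum) (use that fin_NN in auto)
  have vl: "T * \<bar>v 0 l\<bar> \<le> Vs" if "l \<in> NN" for l
    unfolding Vs_def by (rule member_le_sum) (use that fin_NN T0 in auto)
  have Vs0: "0 \<le> Vs" unfolding Vs_def using T0 by (simp add: sum_nonneg)
  have r0: "\<forall>l \<in> NN. - A \<le> x 0 l \<and> x 0 l \<le> A"
  proof
    fix l assume "l \<in> NN"
    then have "\<bar>x 0 l\<bar> \<le> A" by (rule xl)
    then show "- A \<le> x 0 l \<and> x 0 l \<le> A" using abs_le_iff[of "x 0 l" A] by linarith
  qed
  show ?thesis unfolding Inv_def
  proof
    fix i assume i: "i \<in> NN"
    have c: "0 \<le> 1 - T\<^sup>2/2 * S 0 i"
    proof -
      have "T\<^sup>2/2 * S 0 i \<le> 1/2 * 1" using T2 T2p S_le1[OF i] S_nn by (intro mult_mono) auto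
      then show ?thesis by simp
    qed
    have tv: "\<bar>T*(1 - \<alpha>*T/2) * v 0 i\<bar> \<le> Vs"
    proof -
      have "\<bar>T*(1 - \<alpha>*T/2) * v 0 i\<bar> = T * \<bar>v 0 i\<bar> * (1 - \<alpha>*T/2)"
        using T0 beta_pos by (simp add: abs_mult)
      also have "\<dots> \<le> T * \<bar>v 0 i\<bar> * 1" using beta_le T0 by (intro mult_left_mono) auto
      finally show ?thesis using vl[OF i] by simp
    qed
    have up: "x 1 i \<le> A + T*(1 - \<alpha>*T/2) * v 0 i"
    proof -
      have e: "x 1 i - T*(1 - \<alpha>*T/2) * v 0 i - A = (1 - T\<^sup>2/2 * S 0 i) * (x 0 i - A) + T\<^sup>2/2 * (\<Sum>j \<in> K 0 i. a i j * (x 0 j - A))"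
        unfolding x1_eq[OF i] w_eq[of 0 i A] by (simp add: field_simps)
      have "(\<Sum>j \<in> K 0 i. a i j * (x 0 j - A)) \<le> 0"
      proof (rule sum_nonpos)
        fix j assume j: "j \<in> K 0 i"
        have "x 0 j \<le> A" using kept_rng(2)[OF i j r0] .
        moreover have "0 \<le> a i j" using a_nn j K_sub by blast
        ultimately show "a i j * (x 0 j - A) \<le> 0" by (simp add: mult_nonneg_nonpos)
      qed
      moreover have "(1 - T\<^sup>2/2 * S 0 i) * (x 0 i - A) \<le> 0" using c r0 i by (simp add: mult_nonneg_nonpos)
      ultimately have "x 1 i - T*(1 - \<alpha>*T/2) * v 0 i - A \<le> 0" unfolding e using T2p
        by (simp add: mult_nonneg_nonpos add_nonpos_nonpos)
      then show ?thesis by simp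
    qed
    have lo: "- A + T*(1 - \<alpha>*T/2) * v 0 i \<le> x 1 i"
    proof -
      have e: "x 1 i - T*(1 - \<alpha>*T/2) * v 0 i - (- A) = (1 - T\<^sup>2/2 * S 0 i) * (x 0 i - (-A)) + T\<^sup>2/2 * (\<Sum>j \<in> K 0 i. a i j * (x 0 j - (-A)))"
        unfolding x1_eq[OF i] w_eq[of 0 i "-A"] by (simp add: field_simps)
      have "(\<Sum>j \<in> K 0 i. a i j * (x 0 j - (-A))) \<ge> 0"
      proof (rule sum_nonneg)
        fix j assume j: "j \<in> K 0 i"
        have "- A \<le> x 0 j" using kept_rng(1)[OF i j r0] .
        moreover have "0 \<le> a i j" using a_nn j K_sub by blast
        ultimately show "a i j * (x 0 j - (-A)) \<ge> 0" by simp
      qed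
      moreover have "(1 - T\<^sup>2/2 * S 0 i) * (x 0 i - (-A)) \<ge> 0"
      proof -
        have "- A \<le> x 0 i" using r0 i by blast
        then have "0 \<le> x 0 i - (-A)" by simp
        then show ?thesis using c by (rule mult_nonneg_nonneg[rotated])
      qed
      ultimately have "x 1 i - T*(1 - \<alpha>*T/2) * v 0 i - (-A) \<ge> 0" unfolding e using T2p by simp
      then show ?thesis by simp
    qed
    have tv2: "T*(1 - \<alpha>*T/2) * v 0 i \<le> Vs" "- (T*(1 - \<alpha>*T/2) * v 0 i) \<le> Vs"
      using tv abs_le_iff[of "T*(1 - \<alpha>*T/2) * v 0 i" Vs] by linarith+
    have x0: "- A \<le> x 0 i" "x 0 i \<le> A" using r0 i by blast+
    show "- Bd \<le> x 0 i \<and> x 0 i \<le> Bd \<and> - Bd \<le> x (Suc 0) i \<and> x (Suc 0) i \<le> Bd"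
      unfolding BA One_nat_def[symmetric] using up lo tv2 x0 Vs0 by linarith
  qed
qed

lemma bound_all: assumes "i \<in> NN" shows "- Bd \<le> x k i \<and> x k i \<le> Bd"
  using Inv_mono[OF Inv0, of k] assms unfolding Inv_def by simp

lemma D_tend: "(\<lambda>k. hiP k - loP k) \<longlonglongrightarrow> 0"
proof -
  let ?q = "1 - eta T \<gamma> n E" and ?N = "NN0 n E"
  let ?\<rho> = "root ?N ?q"
  have N0: "0 < ?N" unfolding NN0_def by simp
  have q: "0 < ?q" "?q < 1" using eta_bnd by auto
  have r0: "0 < ?\<rho>" "?\<rho> < 1" using q N0 by simp_all
  have h: "(\<lambda>k. (1 / ?q) * Vfun NN x 1 * ?\<rho> ^ Suc k) \<longlonglongrightarrow> (1 / ?q) * Vfun NN x 1 * 0"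
    by (intro tendsto_intros LIMSEQ_Suc LIMSEQ_power_zero) (use r0 in simp)
  show ?thesis
  proof (rule real_tendsto_sandwich[OF _ _ tendsto_const])
    show "\<forall>\<^sub>F k in sequentially. 0 \<le> hiP k - loP k" using P_le by simp
    show "\<forall>\<^sub>F k in sequentially. hiP k - loP k \<le> (1 / ?q) * Vfun NN x 1 * ?\<rho> ^ Suc k"
    proof (rule always_eventually, rule allI)
      fix k
      have "hiP k - loP k = Vfun NN x (Suc k)" using V_eq by simp
      also have "\<dots> \<le> (1 / ?q) * ?\<rho> ^ Suc k * Vfun NN x 1" by (rule decay) simp
      finally show "hiP k - loP k \<le> (1 / ?q) * Vfun NN x 1 * ?\<rho> ^ Suc k" by (simp add: algebra_simps)
    qed
    show "(\<lambda>k. (1 / ?q) * Vfun NN x 1 * ?\<rho> ^ Suc k) \<longlonglongrightarrow> 0" using h by simp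
  qed
qed

lemma w_bnd: assumes i: "i \<in> NN" shows "\<bar>w k i\<bar> \<le> hiP k - loP k"
proof -
  let ?D = "hiP k - loP k"
  have I: "\<forall>l \<in> NN. loP k \<le> x k l \<and> x k l \<le> hiP k" using Inv_P[of k] unfolding Inv_def by blast
  have xi: "loP k \<le> x k i" "x k i \<le> hiP k" using I i by auto
  have t: "\<bar>a i j * (x k j - x k i)\<bar> \<le> a i j * ?D" if j: "j \<in> K k i" for j
  proof -
    have "loP k \<le> x k j" "x k j \<le> hiP k" using kept_rng[OF i j I] by auto
    then have "\<bar>x k j - x k i\<bar> \<le> ?D" using xi by linarith
    moreover have "0 \<le> a i j" using a_nn j K_sub by blast
    ultimately show ?thesis by (simp add: abs_mult mult_left_mono)
  qed
  have "\<bar>w k i\<bar> \<le> (\<Sum>j \<in> K k i. \<bar>a i j * (x k j - x k i)\<bar>)" unfolding w_def by (rule sum_abs)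
  also have "\<dots> \<le> (\<Sum>j \<in> K k i. a i j * ?D)" by (rule sum_mono) (rule t)
  also have "\<dots> = S k i * ?D" unfolding S_def by (simp add: sum_distrib_right)
  also have "\<dots> \<le> 1 * ?D" using S_le1[OF i] P_le[of k] by (intro mult_right_mono) auto
  finally show ?thesis by simp
qed

lemma conv: "\<exists>cc. - Bd \<le> cc \<and> cc \<le> Bd \<and> (\<forall>i \<in> NN. (\<lambda>k. x k i) \<longlonglongrightarrow> cc \<and> (\<lambda>k. v k i) \<longlonglongrightarrow> 0)"
proof -
  have ib: "- Bd \<le> loP k \<and> hiP k \<le> Bd" for k using P_of_Inv[OF Inv_mono[OF Inv0, of k]] by simp
  have inc: "incseq loP" by (rule incseq_SucI) (use P_mono(1)[of _ 1] in simp)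
  have bdd: "bdd_above (range loP)" using ib P_le by (meson bdd_aboveI2 order_trans)
  define cc where "cc = (SUP k. loP k)"
  have lc: "loP \<longlonglongrightarrow> cc" unfolding cc_def by (rule LIMSEQ_incseq_SUP[OF bdd inc])
  have c1: "- Bd \<le> cc" by (rule LIMSEQ_le_const[OF lc]) (use ib in blast)
  have c2: "cc \<le> Bd" by (rule LIMSEQ_le_const2[OF lc]) (use ib P_le in \<open>meson order_trans\<close>)
  have xc: "(\<lambda>k. x k i) \<longlonglongrightarrow> cc" if i: "i \<in> NN" for i
  proof (rule real_tendsto_sandwich[OF _ _ lc])
    have I: "loP k \<le> x k i \<and> x k i \<le> hiP k" for k using Inv_P[of k] i unfolding Inv_def by blast
    show "\<forall>\<^sub>F k in sequentially. loP k \<le> x k i" using I by simp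
    show "\<forall>\<^sub>F k in sequentially. x k i \<le> loP k + (hiP k - loP k)" using I by simp
    show "(\<lambda>k. loP k + (hiP k - loP k)) \<longlonglongrightarrow> cc" using tendsto_add[OF lc D_tend] by simp
  qed
  have vc: "(\<lambda>k. v k i) \<longlonglongrightarrow> 0" if i: "i \<in> NN" for i
  proof -
    have wc: "(\<lambda>k. w k i) \<longlonglongrightarrow> 0"
    proof (rule real_tendsto_sandwich[of "\<lambda>k. - (hiP k - loP k)" _ _ "\<lambda>k. hiP k - loP k"])
      show "\<forall>\<^sub>F k in sequentially. - (hiP k - loP k) \<le> w k i"
      proof (rule always_eventually, rule allI)
        fix k show "- (hiP k - loP k) \<le> w k i" using w_bnd[OF i, of k] abs_le_iff[of "w k i"] by linarith
      qed
      show "\<forall>\<^sub>F k in sequentially. w k i \<le> hiP k - loP k"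
      proof (rule always_eventually, rule allI)
        fix k show "w k i \<le> hiP k - loP k" using w_bnd[OF i, of k] abs_le_iff[of "w k i"] by linarith
      qed
      show "(\<lambda>k. - (hiP k - loP k)) \<longlonglongrightarrow> 0" using tendsto_minus[OF D_tend] by simp
    qed (rule D_tend)
    have ve: "v k i = (x (Suc k) i - x k i - T\<^sup>2/2 * w k i) / (T * (1 - \<alpha>*T/2))" for k
    proof -
      have "x (Suc k) i - x k i - T\<^sup>2/2 * w k i = T * (1 - \<alpha>*T/2) * v k i"
        using dyn(1)[OF i, of k] u_eq[OF i, of k] by (simp add: algebra_simps power2_eq_square)
      then show ?thesis using T0 beta_pos by simp
    qed
    have "(\<lambda>k. (x (Suc k) i - x k i - T\<^sup>2/2 * w k i) / (T * (1 - \<alpha>*T/2))) \<longlonglongrightarrow> (cc - cc - T\<^sup>2/2 * 0) / (T * (1 - \<alpha>*T/2))"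
      by (intro tendsto_intros LIMSEQ_Suc xc[OF i] wc) (use T0 beta_pos in simp)
    then show ?thesis unfolding ve by simp
  qed
  show ?thesis using c1 c2 xc vc by blast
qed


end

definition Bnd :: "real \<Rightarrow> nat \<Rightarrow> nat set \<Rightarrow> (nat \<Rightarrow> real) \<Rightarrow> (nat \<Rightarrow> real) \<Rightarrow> real" where
  "Bnd T n M x0 v0 = (\<Sum>i \<in> {1..n} - M. \<bar>x0 i\<bar> + T * \<bar>v0 i\<bar>)"

theorem corollary1:
  fixes n f :: nat and E :: "(nat \<times> nat) set" and a :: "nat \<Rightarrow> nat \<Rightarrow> real"
    and \<gamma> T \<alpha> :: real
  assumes "digraph n E"
    and "admissible_weights n E \<gamma> a"
    and "robust n E (f + 1) (f + 1)"
    and "0 < T"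
    and "1 + T\<^sup>2 / 2 \<le> \<alpha> * T" and "\<alpha> * T \<le> 2 - T\<^sup>2 / 2"
  shows
    "(\<exists>Lo Up :: nat set \<Rightarrow> (nat \<Rightarrow> real) \<Rightarrow> (nat \<Rightarrow> real) \<Rightarrow> real.
        (\<forall>M x0 v0 x0' v0'. (\<forall>i \<in> {1..n} - M. x0 i = x0' i \<and> v0 i = v0' i) \<longrightarrow>
             Lo M x0 v0 = Lo M x0' v0' \<and> Up M x0 v0 = Up M x0' v0') \<and>
        (\<forall>M x v u. M \<subseteq> {1..n} \<longrightarrow> card M \<le> f \<longrightarrow> dpmsr_traj n E a f T \<alpha> M x v u \<longrightarrow>
             (\<forall>k. \<forall>i \<in> {1..n} - M. Lo M (x 0) (v 0) \<le> x k i \<and> x k i \<le> Up M (x 0) (v 0)) \<and>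
             (\<exists>c. Lo M (x 0) (v 0) \<le> c \<and> c \<le> Up M (x 0) (v 0) \<and>
                  (\<forall>i \<in> {1..n} - M. (\<lambda>k. x k i) \<longlonglongrightarrow> c \<and> (\<lambda>k. v k i) \<longlonglongrightarrow> 0)))) \<and>
     (\<exists>C \<rho> :: real. 0 < C \<and> 0 < \<rho> \<and> \<rho> < 1 \<and>
        (\<forall>M x v u. M \<subseteq> {1..n} \<longrightarrow> card M \<le> f \<longrightarrow> dpmsr_traj n E a f T \<alpha> M x v u \<longrightarrow>
             (\<forall>k \<ge> 1. Vfun ({1..n} - M) x k \<le> C * \<rho> ^ k * Vfun ({1..n} - M) x 1)))"
proof -
  have loc: "sys n f E a \<gamma> T \<alpha> M x v u"
    if "M \<subseteq> {1..n}" "card M \<le> f" "dpmsr_traj n E a f T \<alpha> M x v u" for M x v u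
    using assms that unfolding sys_def by blast
  define Lo :: "nat set \<Rightarrow> (nat \<Rightarrow> real) \<Rightarrow> (nat \<Rightarrow> real) \<Rightarrow> real" where "Lo M x0 v0 = - Bnd T n M x0 v0" for M x0 v0
  define Up :: "nat set \<Rightarrow> (nat \<Rightarrow> real) \<Rightarrow> (nat \<Rightarrow> real) \<Rightarrow> real" where "Up M x0 v0 = Bnd T n M x0 v0" for M x0 v0
  have P1: "\<forall>M x0 v0 x0' v0'. (\<forall>i \<in> {1..n} - M. x0 i = x0' i \<and> v0 i = v0' i) \<longrightarrow>
           Lo M x0 v0 = Lo M x0' v0' \<and> Up M x0 v0 = Up M x0' v0'"
  proof (intro allI impI)
    fix M and x0 v0 x0' v0' :: "nat \<Rightarrow> real"
    assume h: "\<forall>i \<in> {1..n} - M. x0 i = x0' i \<and> v0 i = v0' i"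
    have "Bnd T n M x0 v0 = Bnd T n M x0' v0'" unfolding Bnd_def by (rule sum.cong) (use h in simp_all)
    then show "Lo M x0 v0 = Lo M x0' v0' \<and> Up M x0 v0 = Up M x0' v0'" unfolding Lo_def Up_def by simp
  qed
  have P2: "\<forall>M x v u. M \<subseteq> {1..n} \<longrightarrow> card M \<le> f \<longrightarrow> dpmsr_traj n E a f T \<alpha> M x v u \<longrightarrow>
           (\<forall>k. \<forall>i \<in> {1..n} - M. Lo M (x 0) (v 0) \<le> x k i \<and> x k i \<le> Up M (x 0) (v 0)) \<and>
           (\<exists>c. Lo M (x 0) (v 0) \<le> c \<and> c \<le> Up M (x 0) (v 0) \<and>
                (\<forall>i \<in> {1..n} - M. (\<lambda>k. x k i) \<longlonglongrightarrow> c \<and> (\<lambda>k. v k i) \<longlonglongrightarrow> 0))"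
  proof (intro allI impI)
    fix M x v u
    assume h: "M \<subseteq> {1..n}" "card M \<le> f" "dpmsr_traj n E a f T \<alpha> M x v u"
    interpret S: sys n f E a \<gamma> T \<alpha> M x v u by (rule loc[OF h])
    have BB: "S.Bd = Bnd T n M (x 0) (v 0)" unfolding S.Bd_def Bnd_def S.NN_def ..
    have "\<forall>k. \<forall>i \<in> {1..n} - M. Lo M (x 0) (v 0) \<le> x k i \<and> x k i \<le> Up M (x 0) (v 0)"
      using S.bound_all unfolding Lo_def Up_def BB[symmetric] S.NN_def by blast
    moreover have "\<exists>c. Lo M (x 0) (v 0) \<le> c \<and> c \<le> Up M (x 0) (v 0) \<and>
                (\<forall>i \<in> {1..n} - M. (\<lambda>k. x k i) \<longlonglongrightarrow> c \<and> (\<lambda>k. v k i) \<longlonglongrightarrow> 0)"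
      using S.conv unfolding Lo_def Up_def BB[symmetric] S.NN_def by blast
    ultimately show "(\<forall>k. \<forall>i \<in> {1..n} - M. Lo M (x 0) (v 0) \<le> x k i \<and> x k i \<le> Up M (x 0) (v 0)) \<and>
           (\<exists>c. Lo M (x 0) (v 0) \<le> c \<and> c \<le> Up M (x 0) (v 0) \<and>
                (\<forall>i \<in> {1..n} - M. (\<lambda>k. x k i) \<longlonglongrightarrow> c \<and> (\<lambda>k. v k i) \<longlonglongrightarrow> 0))" by blast
  qed
  let ?q = "1 - eta T \<gamma> n E" and ?N = "NN0 n E"
  have g0: "0 < \<gamma>" using assms(2) unfolding admissible_weights_def by simp
  have T2: "T\<^sup>2 \<le> 1" using assms(5,6) by linarith
  have d0: "0 < T\<^sup>2/2 * min \<gamma> 1" using g0 assms(4) by simp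
  have d1: "T\<^sup>2/2 * min \<gamma> 1 \<le> 1"
  proof -
    have "T\<^sup>2/2 * min \<gamma> 1 \<le> 1 * 1" using T2 g0 by (intro mult_mono) auto
    then show ?thesis by simp
  qed
  have e0: "0 < eta T \<gamma> n E" unfolding eta_def using d0 by simp
  have e1: "eta T \<gamma> n E \<le> 1/2" unfolding eta_def using d0 d1 by (simp add: power_le_one)
  have N0: "0 < ?N" unfolding NN0_def by simp
  have P3: "\<forall>M x v u. M \<subseteq> {1..n} \<longrightarrow> card M \<le> f \<longrightarrow> dpmsr_traj n E a f T \<alpha> M x v u \<longrightarrow>
             (\<forall>k \<ge> 1. Vfun ({1..n} - M) x k \<le> 1 / ?q * root ?N ?q ^ k * Vfun ({1..n} - M) x 1)"
  proof (intro allI impI)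
    fix M x v u and k :: nat
    assume h: "M \<subseteq> {1..n}" "card M \<le> f" "dpmsr_traj n E a f T \<alpha> M x v u" and k: "1 \<le> k"
    interpret S: sys n f E a \<gamma> T \<alpha> M x v u by (rule loc[OF h])
    show "Vfun ({1..n} - M) x k \<le> 1 / ?q * root ?N ?q ^ k * Vfun ({1..n} - M) x 1"
      using S.decay[OF k] unfolding S.NN_def .
  qed
  have C0: "0 < 1 / ?q" using e1 by simp
  have r0: "0 < root ?N ?q" using e1 N0 by simp
  have r1: "root ?N ?q < 1" using e0 N0 by simp
  show ?thesis using P1 P2 P3 C0 r0 r1 by blast
qed

end
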